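(* Let $\mathcal{H}_A,\mathcal{H}_B$ be finite-dimensional Hilbert spaces, let $|\Psi\rangle,|\Phi\rangle\in\mathcal{H}_A\otimes\mathcal{H}_B$ be unit vectors (not necessarily orthogonal), and let $\alpha,\beta\in\mathbb{C}$ with $|\alpha|^2+|\beta|^2=1$ such that $|\Gamma\rangle=\alpha|\Psi\rangle+\beta|\Phi\rangle\neq 0$. Define $\rho^{AB}=|\alpha|^2|\Psi\rangle\langle\Psi|+|\beta|^2|\Phi\rangle\langle\Phi|$, $\rho^A=\mathrm{Tr}_B\rho^{AB}$, $\rho^B=\mathrm{Tr}_A\rho^{AB}$. Then $$\big\|\,|\Gamma\rangle\big\|^2\,E(\Gamma)\le 2\Big[|\alpha|^2E(\Psi)+|\beta|^2E(\Phi)+h_2(|\alpha|^2)-|S(\rho^A)-S(\rho^B)|\Big].$$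
   Context: $S(\rho)=-\mathrm{Tr}(\rho\log\rho)$ is the von Neumann entropy (logarithm base 2). For a nonzero vector $|\chi\rangle\in\mathcal{H}_A\otimes\mathcal{H}_B$, its entanglement is $E(\chi)=S\big(\mathrm{Tr}_B|\chi\rangle\langle\chi|/\langle\chi|\chi\rangle\big)$, i.e. the entropy of entanglement of the normalized vector. $h_2(x)=-x\log x-(1-x)\log(1-x)$ is the binary entropy function, with $0\log 0=0$. *)

theory Defs
  imports Complex_Main "Jordan_Normal_Form.Char_Poly"
begin

text \<open>A vector of H_A (x) H_B (dimensions dA, dB) is a complex vector of dimension dA*dB;
  the basis vector |i>|j> has index i*dB + j.\<close>

definition outer :: "complex vec \<Rightarrow> complex mat" where
  "outer v = mat (dim_vec v) (dim_vec v) (\<lambda>(i,k). v $ i * cnj (v $ k))"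

definition ptrace_B :: "nat \<Rightarrow> nat \<Rightarrow> complex mat \<Rightarrow> complex mat" where
  "ptrace_B dA dB \<rho> = mat dA dA (\<lambda>(i,i'). \<Sum>j<dB. \<rho> $$ (i*dB + j, i'*dB + j))"

definition ptrace_A :: "nat \<Rightarrow> nat \<Rightarrow> complex mat \<Rightarrow> complex mat" where
  "ptrace_A dA dB \<rho> = mat dB dB (\<lambda>(j,j'). \<Sum>i<dA. \<rho> $$ (i*dB + j, i*dB + j'))"

definition sqnorm :: "complex vec \<Rightarrow> real" where
  "sqnorm v = (\<Sum>i<dim_vec v. (cmod (v $ i))^2)"

definition xlog2x :: "real \<Rightarrow> real" where
  "xlog2x x = (if x \<le> 0 then 0 else x * log 2 x)"

text \<open>von Neumann entropy (base 2): -Tr(rho log rho) = - sum over eigenvalues (with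
  algebraic multiplicity, as roots of the characteristic polynomial) of lambda log lambda.\<close>
definition vN_entropy :: "complex mat \<Rightarrow> real" where
  "vN_entropy \<rho> = - (\<Sum>z\<in>{z. poly (char_poly \<rho>) z = 0}.
       real (order z (char_poly \<rho>)) * xlog2x (Re z))"

definition ent :: "nat \<Rightarrow> nat \<Rightarrow> complex vec \<Rightarrow> real" where
  "ent dA dB v = vN_entropy (ptrace_B dA dB ((1 / complex_of_real (sqnorm v)) \<cdot>\<^sub>m outer v))"

definition h2 :: "real \<Rightarrow> real" where
  "h2 x = - xlog2x x - xlog2x (1 - x)"

end

theory Submission
  imports Defs "HOL-Computational_Algebra.Fundamental_Theorem_Algebra"
begin

definition eta :: "real \<Rightarrow> real" where "eta x = - xlog2x x"

lemma eta_0[simp]: "eta 0 = 0" by (simp add: eta_def xlog2x_def)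

lemma eta_pos: "0 < x \<Longrightarrow> eta x = - x * ln x / ln 2"
  by (simp add: eta_def xlog2x_def log_def)

lemma eta_nonneg: assumes "0 \<le> x" "x \<le> 1" shows "0 \<le> eta x"
proof (cases "x = 0")
  case False
  hence "0 < x" using assms by auto
  moreover have "ln x \<le> 0" using assms \<open>0<x\<close> by simp
  ultimately have "x * ln x \<le> 0" by (simp add: mult_nonneg_nonpos)
  thus ?thesis using \<open>0<x\<close> by (simp add: eta_pos divide_nonpos_pos)
qed simp

lemma eta_mult: assumes "0 \<le> a" "0 \<le> b" shows "eta (a*b) = a * eta b + b * eta a"
proof (cases "a = 0 \<or> b = 0")
  case False
  hence "0 < a" "0 < b" using assms by auto
  thus ?thesis by (simp add: eta_pos ln_mult field_simps)
qed auto

lemma ln_tangent: fixes x y :: real assumes "0 < x" "0 < y" shows "x * ln y - x * ln x \<le> y - x"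
proof -
  have "ln (y/x) \<le> y/x - 1" using assms by (intro ln_le_minus_one) auto
  hence "x * ln (y/x) \<le> x * (y/x - 1)" using assms by (intro mult_left_mono) auto
  moreover have "x * (y/x - 1) = y - x" using assms by (simp add: field_simps)
  moreover have "ln (y/x) = ln y - ln x" using assms by (simp add: ln_div)
  ultimately show ?thesis by (simp add: right_diff_distrib)
qed

lemma eta_tangent: assumes "0 \<le> x" "0 < y"
  shows "eta x \<le> eta y + (- ln y / ln 2 - 1 / ln 2) * (x - y)"
proof (cases "x = 0")
  case True
  thus ?thesis using assms by (simp add: eta_pos field_simps)
next
  case False
  hence x: "0 < x" using assms by auto
  have l2: "0 < ln (2::real)" by simp
  have "x * ln y - x * ln x \<le> y - x" by (rule ln_tangent[OF x assms(2)])
  hence "(- x * ln x) \<le> (- y * ln y) + (- ln y - 1) * (x - y)" by (simp add: algebra_simps)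
  hence "(- x * ln x) / ln 2 \<le> ((- y * ln y) + (- ln y - 1) * (x - y)) / ln 2"
    using l2 by (intro divide_right_mono) auto
  moreover have "eta y + (- ln y / ln 2 - 1 / ln 2) * (x - y) = ((- y * ln y) + (- ln y - 1) * (x - y)) / ln 2"
    using assms l2 by (simp add: eta_pos divide_simps)
  ultimately show ?thesis using x by (simp add: eta_pos)
qed

lemma eta_jensen_sub:
  assumes "finite S" "\<And>j. j \<in> S \<Longrightarrow> 0 \<le> Q j" "\<And>j. j \<in> S \<Longrightarrow> 0 \<le> x j" "sum Q S \<le> 1"
  shows "(\<Sum>j\<in>S. Q j * eta (x j)) \<le> eta (\<Sum>j\<in>S. Q j * x j)"
proof -
  define y where "y = (\<Sum>j\<in>S. Q j * x j)"
  have y0: "0 \<le> y" unfolding y_def using assms by (intro sum_nonneg) auto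
  show ?thesis
  proof (cases "y = 0")
    case True
    have "\<forall>j\<in>S. Q j * x j = 0"
      using True[unfolded y_def] assms by (subst (asm) sum_nonneg_eq_0_iff) auto
    hence "\<forall>j\<in>S. Q j * eta (x j) = 0" by auto
    hence "(\<Sum>j\<in>S. Q j * eta (x j)) = 0" by (metis (no_types, lifting) mult_zero_left mult_zero_right sum.neutral)
    thus ?thesis using True y_def by simp
  next
    case False
    hence y: "0 < y" using y0 by auto
    define c where "c = (- ln y / ln 2 - 1 / ln 2)"
    have "(\<Sum>j\<in>S. Q j * eta (x j)) \<le> (\<Sum>j\<in>S. Q j * (eta y + c * (x j - y)))"
      using assms eta_tangent[OF _ y] unfolding c_def by (intro sum_mono mult_left_mono) auto
    also have "\<dots> = (\<Sum>j\<in>S. eta y * Q j + c * (Q j * x j) - (c*y) * Q j)"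
      by (rule sum.cong) (simp_all add: algebra_simps)
    also have "\<dots> = eta y * sum Q S + c * (\<Sum>j\<in>S. Q j * x j) - (c*y) * sum Q S"
      by (simp add: sum.distrib sum_subtractf sum_distrib_left)
    also have "\<dots> = sum Q S * eta y + c * (y - sum Q S * y)"
      by (simp add: y_def[symmetric] algebra_simps)
    also have "\<dots> = eta y - (1 - sum Q S) * y / ln 2"
      using y by (simp add: c_def eta_pos field_simps)
    also have "\<dots> \<le> eta y" using assms y by (simp add: divide_nonneg_pos)
    finally show ?thesis unfolding y_def .
  qed
qed

lemma eta_core:
  assumes "finite J" "finite KK" "\<And>j. j \<in> J \<Longrightarrow> 0 \<le> lam j"
    "\<And>k j. k \<in> KK \<Longrightarrow> j \<in> J \<Longrightarrow> 0 \<le> Q k j"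
    "\<And>k. k \<in> KK \<Longrightarrow> (\<Sum>j\<in>J. Q k j) \<le> 1"
    "\<And>j. j \<in> J \<Longrightarrow> 0 < lam j \<Longrightarrow> (\<Sum>k\<in>KK. Q k j) = 1"
  shows "(\<Sum>j\<in>J. eta (lam j)) \<le> (\<Sum>k\<in>KK. eta (\<Sum>j\<in>J. Q k j * lam j))"
proof -
  have "(\<Sum>j\<in>J. eta (lam j)) = (\<Sum>j\<in>J. (\<Sum>k\<in>KK. Q k j) * eta (lam j))"
  proof (rule sum.cong)
    fix j assume j: "j \<in> J"
    show "eta (lam j) = (\<Sum>k\<in>KK. Q k j) * eta (lam j)"
    proof (cases "lam j = 0")
      case False thus ?thesis using assms(3,6)[OF j] j by force
    qed simp
  qed simp
  also have "\<dots> = (\<Sum>k\<in>KK. \<Sum>j\<in>J. Q k j * eta (lam j))"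
    by (simp add: sum_distrib_right sum.swap[of _ J])
  also have "\<dots> \<le> (\<Sum>k\<in>KK. eta (\<Sum>j\<in>J. Q k j * lam j))"
    using assms by (intro sum_mono eta_jensen_sub) auto
  finally show ?thesis .
qed

lemma eta_conc:
  assumes d: "0 \<le> d" and d': "0 \<le> d'" and s: "0 < s" "s \<le> 1" and dd: "d' \<le> 1 - s"
  shows "s * eta (d / s) \<le> eta (d + d')"
proof (cases "d = 0")
  case True
  thus ?thesis using d' dd s by (simp add: eta_nonneg)
next
  case False
  hence dp: "0 < d" using d by auto
  have l2: "0 < ln (2::real)" by simp
  have key: "(d + d') * ln (d + d') \<le> d * ln (d / s)"
  proof (cases "d' = 0")
    case True
    thus ?thesis using dp s by (simp add: ln_div)
  next
    case False
    hence dp': "0 < d'" using d' by auto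
    hence s': "0 < 1 - s" using dd by auto
    define D where "D = d + d'"
    have D: "0 < D" using dp dp' D_def by auto
    have t1: "d * ln (s*D) - d * ln d \<le> s * D - d"
      using ln_tangent[OF dp, of "s*D"] D s by auto
    have t2: "d' * ln ((1-s)*D) - d' * ln d' \<le> (1-s) * D - d'"
      using ln_tangent[OF dp', of "(1-s)*D"] D s' by auto
    have "d' * ln (d' / (1-s)) \<le> 0"
    proof -
      have "d'/(1-s) \<le> 1" using dd s' by simp
      hence "ln (d'/(1-s)) \<le> 0" using dp' s' by simp
      thus ?thesis using dp' by (simp add: mult_nonneg_nonpos)
    qed
    moreover have "D * ln D \<le> d * ln (d/s) + d' * ln (d'/(1-s))"
    proof -
      have e1: "ln (s*D) = ln s + ln D" using s D by (simp add: ln_mult)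
      have e2: "ln ((1-s)*D) = ln (1-s) + ln D" using s' D by (simp add: ln_mult)
      have e3: "ln (d/s) = ln d - ln s" using s dp by (simp add: ln_div)
      have e4: "ln (d'/(1-s)) = ln d' - ln (1-s)" using s' dp' by (simp add: ln_div)
      have f1: "D * ln D = d * ln D + d' * ln D" using D_def by (simp add: algebra_simps)
      have f2: "s*D + (1-s)*D = d + d'" using D_def by (simp add: algebra_simps)
      have g1: "d * ln s + d * ln D - d * ln d \<le> s * D - d" using t1 unfolding e1 by (simp add: algebra_simps)
      have g2: "d' * ln (1-s) + d' * ln D - d' * ln d' \<le> (1-s) * D - d'" using t2 unfolding e2 by (simp add: algebra_simps)
      have "d * ln (d/s) + d' * ln (d'/(1-s)) = d * ln d - d * ln s + d' * ln d' - d' * ln (1-s)"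
        unfolding e3 e4 by (simp add: algebra_simps)
      thus ?thesis using f1 f2 g1 g2 by linarith
    qed
    ultimately show ?thesis unfolding D_def by linarith
  qed
  have "s * eta (d/s) = - d * ln (d/s) / ln 2" using dp s by (simp add: eta_pos)
  also have "\<dots> \<le> - (d+d') * ln (d+d') / ln 2"
  proof (rule divide_right_mono)
    show "- d * ln (d / s) \<le> - (d + d') * ln (d + d')" using key by (simp only: mult_minus_left neg_le_iff_le)
  qed (use l2 in auto)
  also have "\<dots> = eta (d+d')" using dp d' by (simp add: eta_pos)
  finally show ?thesis .
qed

definition gram :: "nat \<Rightarrow> (nat \<Rightarrow> nat \<Rightarrow> complex) \<Rightarrow> nat \<Rightarrow> nat \<Rightarrow> complex" where
  "gram K M i i' = (\<Sum>k<K. M k i * cnj (M k i'))"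

definition dualf :: "(nat \<Rightarrow> nat \<Rightarrow> complex) \<Rightarrow> nat \<Rightarrow> nat \<Rightarrow> complex" where
  "dualf M i k = cnj (M k i)"

definition nsq :: "nat \<Rightarrow> (nat \<Rightarrow> complex) \<Rightarrow> real" where
  "nsq n v = (\<Sum>i<n. (cmod (v i))\<^sup>2)"

definition rowc :: "nat \<Rightarrow> (nat \<Rightarrow> nat \<Rightarrow> complex) \<Rightarrow> bool" where
  "rowc n U \<longleftrightarrow> (\<forall>i<n. \<forall>i'<n. (\<Sum>j<n. U i j * cnj (U i' j)) = (if i = i' then 1 else 0))"

definition colc :: "nat \<Rightarrow> (nat \<Rightarrow> nat \<Rightarrow> complex) \<Rightarrow> bool" where
  "colc n U \<longleftrightarrow> (\<forall>j<n. \<forall>l<n. (\<Sum>i<n. cnj (U i j) * U i l) = (if j = l then 1 else 0))"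

definition SD :: "nat \<Rightarrow> (nat \<Rightarrow> nat \<Rightarrow> complex) \<Rightarrow> (nat \<Rightarrow> nat \<Rightarrow> complex) \<Rightarrow> (nat \<Rightarrow> real) \<Rightarrow> bool" where
  "SD n R U lam \<longleftrightarrow> colc n U \<and> rowc n U \<and>
     (\<forall>i<n. \<forall>i'<n. R i i' = (\<Sum>j<n. U i j * complex_of_real (lam j) * cnj (U i' j)))"

lemma sum_swap3: "(\<Sum>i\<in>A. \<Sum>j\<in>B. \<Sum>k\<in>C. f i j k) = (\<Sum>k\<in>C. \<Sum>i\<in>A. \<Sum>j\<in>B. f i j k)"
proof -
  have "(\<Sum>i\<in>A. \<Sum>j\<in>B. \<Sum>k\<in>C. f i j k) = (\<Sum>i\<in>A. \<Sum>k\<in>C. \<Sum>j\<in>B. f i j k)"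
    by (rule sum.cong[OF refl], rule sum.swap)
  also have "\<dots> = (\<Sum>k\<in>C. \<Sum>i\<in>A. \<Sum>j\<in>B. f i j k)" by (rule sum.swap)
  finally show ?thesis .
qed

lemma cmod_sq: "complex_of_real ((cmod z)\<^sup>2) = z * cnj z"
  by (rule complex_norm_square)

lemma sum_delta2: fixes j l n :: nat shows "j < n \<Longrightarrow> l < n \<Longrightarrow>
   (\<Sum>p<n. (if j = p then 1 else 0) * (c p :: complex) * (if p = l then 1 else 0)) = (if j = l then c j else 0)"
proof -
  assume a: "j < n" "l < n"
  have "\<And>p. (if j = p then 1 else 0) * c p * (if p = l then 1 else 0) = (if p = j then (if j = l then c j else 0) else 0)"
    by auto
  hence "(\<Sum>p<n. (if j = p then 1 else 0) * c p * (if p = l then 1 else 0)) = (\<Sum>p<n. (if p = j then (if j = l then c j else 0) else 0))"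
    by simp
  also have "\<dots> = (if j = l then c j else 0)" using a by (cases "j = l") auto
  finally show ?thesis .
qed

lemma prod3: fixes f g :: "'b \<Rightarrow> complex" shows "(\<Sum>i\<in>A. f i) * c * (\<Sum>i'\<in>B. g i') = (\<Sum>i\<in>A. \<Sum>i'\<in>B. f i * c * g i')"
  by (simp add: sum_distrib_left sum_distrib_right mult.assoc sum.swap[of _ B])

lemma SD_quad:
  assumes "SD n R U lam" "j < n" "l < n"
  shows "(\<Sum>i<n. \<Sum>i'<n. cnj (U i j) * R i i' * U i' l) = (if j = l then complex_of_real (lam j) else 0)"
proof -
  have col: "colc n U" and R: "\<And>i i'. i < n \<Longrightarrow> i' < n \<Longrightarrow> R i i' = (\<Sum>p<n. U i p * complex_of_real (lam p) * cnj (U i' p))"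
    using assms(1) unfolding SD_def by auto
  have "(\<Sum>i<n. \<Sum>i'<n. cnj (U i j) * R i i' * U i' l)
     = (\<Sum>i<n. \<Sum>i'<n. \<Sum>p<n. (cnj (U i j) * U i p) * complex_of_real (lam p) * (cnj (U i' p) * U i' l))"
    by (intro sum.cong refl) (simp add: R sum_distrib_left sum_distrib_right mult_ac)
  also have "\<dots> = (\<Sum>p<n. \<Sum>i<n. \<Sum>i'<n. (cnj (U i j) * U i p) * complex_of_real (lam p) * (cnj (U i' p) * U i' l))"
    by (rule sum_swap3)
  also have "\<dots> = (\<Sum>p<n. (\<Sum>i<n. cnj (U i j) * U i p) * complex_of_real (lam p) * (\<Sum>i'<n. cnj (U i' p) * U i' l))"
    by (simp only: prod3)
  also have "\<dots> = (\<Sum>p<n. (if j = p then 1 else 0) * complex_of_real (lam p) * (if p = l then 1 else 0))"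
    using col assms(2,3) unfolding colc_def by (intro sum.cong refl) auto
  also have "\<dots> = (if j = l then complex_of_real (lam j) else 0)"
    using assms(2,3) by (rule sum_delta2)
  finally show ?thesis .
qed

lemma gram_herm: "gram K M i i' = cnj (gram K M i' i)"
  by (simp add: gram_def mult.commute)

lemma transfer:
  fixes M :: "nat \<Rightarrow> nat \<Rightarrow> complex"
  assumes "rowc n U"
  defines "W \<equiv> (\<lambda>j k. \<Sum>i<n. cnj (M k i) * U i j)"
  shows "gram n W k k' = gram n (dualf M) k k'"
    and "complex_of_real (nsq K (W j)) = (\<Sum>i<n. \<Sum>i'<n. cnj (U i j) * gram K M i i' * U i' j)"
proof -
  have row: "\<And>i i'. i < n \<Longrightarrow> i' < n \<Longrightarrow> (\<Sum>j<n. U i j * cnj (U i' j)) = (if i = i' then 1 else 0)"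
    using assms(1) unfolding rowc_def by auto
  have "gram n W k k' = (\<Sum>j<n. \<Sum>i<n. \<Sum>i'<n. cnj (M k i) * M k' i' * (U i j * cnj (U i' j)))"
    unfolding gram_def W_def
    by (intro sum.cong refl) (simp add: sum_distrib_left sum_distrib_right mult_ac)
  also have "\<dots> = (\<Sum>i<n. \<Sum>i'<n. \<Sum>j<n. cnj (M k i) * M k' i' * (U i j * cnj (U i' j)))"
    by (subst sum_swap3[symmetric]) (rule refl)
  also have "\<dots> = (\<Sum>i<n. \<Sum>i'<n. cnj (M k i) * M k' i' * (if i = i' then 1 else 0))"
    by (intro sum.cong refl) (simp add: sum_distrib_left[symmetric] row)
  also have "\<dots> = gram n (dualf M) k k'"
    unfolding gram_def dualf_def by (simp add: if_distrib if_distribR sum.If_cases)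
  finally show "gram n W k k' = gram n (dualf M) k k'" .
  have "complex_of_real (nsq K (W j)) = (\<Sum>k<K. W j k * cnj (W j k))"
    unfolding nsq_def of_real_sum cmod_sq ..
  also have "\<dots> = (\<Sum>k<K. \<Sum>i<n. \<Sum>i'<n. cnj (U i' j) * (M k i' * cnj (M k i)) * U i j)"
    unfolding W_def
    by (intro sum.cong refl) (simp add: sum_distrib_left sum_distrib_right mult_ac)
  also have "\<dots> = (\<Sum>i<n. \<Sum>i'<n. \<Sum>k<K. cnj (U i' j) * (M k i' * cnj (M k i)) * U i j)"
    by (subst sum_swap3[symmetric]) (rule refl)
  also have "\<dots> = (\<Sum>i<n. \<Sum>i'<n. cnj (U i' j) * gram K M i' i * U i j)"
    unfolding gram_def by (simp add: sum_distrib_left sum_distrib_right)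
  also have "\<dots> = (\<Sum>i<n. \<Sum>i'<n. cnj (U i j) * gram K M i i' * U i' j)"
    by (rule sum.swap)
  finally show "complex_of_real (nsq K (W j)) = (\<Sum>i<n. \<Sum>i'<n. cnj (U i j) * gram K M i i' * U i' j)" .
qed

lemma sum_swap3': "(\<Sum>i\<in>A. \<Sum>j\<in>B. \<Sum>k\<in>C. f i j k) = (\<Sum>j\<in>B. \<Sum>k\<in>C. \<Sum>i\<in>A. f i j k)"
proof -
  have "(\<Sum>i\<in>A. \<Sum>j\<in>B. \<Sum>k\<in>C. f i j k) = (\<Sum>j\<in>B. \<Sum>i\<in>A. \<Sum>k\<in>C. f i j k)"
    by (rule sum.swap)
  also have "\<dots> = (\<Sum>j\<in>B. \<Sum>k\<in>C. \<Sum>i\<in>A. f i j k)"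
    by (rule sum.cong[OF refl], rule sum.swap)
  finally show ?thesis .
qed

lemma of_real_nsq: "complex_of_real (\<Sum>i\<in>A. (cmod (v i))\<^sup>2) = (\<Sum>i\<in>A. v i * cnj (v i))"
  unfolding of_real_sum cmod_sq ..

lemma K_bound:
  assumes SD: "SD n (gram K M) U lam"
  shows "(\<Sum>j<n. eta (lam j)) \<le> (\<Sum>k<K. eta (nsq n (M k)))"
proof -
  have row: "\<And>i i'. i < n \<Longrightarrow> i' < n \<Longrightarrow> (\<Sum>j<n. U i j * cnj (U i' j)) = (if i = i' then 1 else 0)"
    using SD unfolding SD_def rowc_def by auto
  define a where "a k j = (\<Sum>i<n. cnj (U i j) * M k i)" for k j
  have F1: "(\<Sum>k<K. a k j * cnj (a k l)) = (if j = l then complex_of_real (lam j) else 0)"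
    if "j < n" "l < n" for j l
  proof -
    have "(\<Sum>k<K. a k j * cnj (a k l)) = (\<Sum>k<K. \<Sum>i<n. \<Sum>i'<n. cnj (U i j) * (M k i * cnj (M k i')) * U i' l)"
      unfolding a_def by (intro sum.cong refl) (simp add: sum_product mult_ac)
    also have "\<dots> = (\<Sum>i<n. \<Sum>i'<n. \<Sum>k<K. cnj (U i j) * (M k i * cnj (M k i')) * U i' l)"
      by (rule sum_swap3')
    also have "\<dots> = (\<Sum>i<n. \<Sum>i'<n. cnj (U i j) * gram K M i i' * U i' l)"
      unfolding gram_def by (simp add: sum_distrib_left sum_distrib_right)
    also have "\<dots> = (if j = l then complex_of_real (lam j) else 0)"
      by (rule SD_quad[OF SD that])
    finally show ?thesis .
  qed
  have F2: "(\<Sum>j<n. (cmod (a k j))\<^sup>2) = nsq n (M k)" for k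
  proof -
    have "complex_of_real (\<Sum>j<n. (cmod (a k j))\<^sup>2) = (\<Sum>j<n. a k j * cnj (a k j))"
      by (rule of_real_nsq)
    also have "\<dots> = (\<Sum>j<n. \<Sum>i<n. \<Sum>i'<n. M k i * cnj (M k i') * (U i' j * cnj (U i j)))"
      unfolding a_def by (intro sum.cong refl) (simp add: sum_product mult_ac)
    also have "\<dots> = (\<Sum>i<n. \<Sum>i'<n. \<Sum>j<n. M k i * cnj (M k i') * (U i' j * cnj (U i j)))"
      by (rule sum_swap3')
    also have "\<dots> = (\<Sum>i<n. \<Sum>i'<n. M k i * cnj (M k i') * (if i' = i then 1 else 0))"
      by (intro sum.cong refl) (simp add: sum_distrib_left[symmetric] row)
    also have "\<dots> = (\<Sum>i<n. M k i * cnj (M k i))"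
      by (simp add: if_distrib if_distribR sum.If_cases)
    also have "\<dots> = complex_of_real (nsq n (M k))"
      unfolding nsq_def by (rule of_real_nsq[symmetric])
    finally show ?thesis using of_real_eq_iff by blast
  qed
  have lamsum: "lam j = (\<Sum>k<K. (cmod (a k j))\<^sup>2)" if "j < n" for j
  proof -
    have "complex_of_real (lam j) = (\<Sum>k<K. a k j * cnj (a k j))" using F1[OF that that] by simp
    also have "\<dots> = complex_of_real (\<Sum>k<K. (cmod (a k j))\<^sup>2)" by (rule of_real_nsq[symmetric])
    finally show ?thesis using of_real_eq_iff by blast
  qed
  have lam0: "0 \<le> lam j" if "j < n" for j using lamsum[OF that] by (simp add: sum_nonneg)
  have a0: "a k j = 0" if "j < n" "k < K" "lam j = 0" for j k
  proof -
    have "(\<Sum>k<K. (cmod (a k j))\<^sup>2) = 0" using lamsum[OF that(1)] that(3) by simp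
    hence "(cmod (a k j))\<^sup>2 = 0" using that(2) by (subst (asm) sum_nonneg_eq_0_iff) auto
    thus ?thesis by simp
  qed
  define Q where "Q k j = (cmod (a k j))\<^sup>2 / lam j" for k j
  have Qlam: "Q k j * lam j = (cmod (a k j))\<^sup>2" if "j < n" "k < K" for j k
    using a0[OF that] unfolding Q_def by (cases "lam j = 0") auto
  have colsum: "(\<Sum>k<K. Q k j) = 1" if "j < n" "0 < lam j" for j
    using lamsum[OF that(1)] that(2) unfolding Q_def by (simp add: sum_divide_distrib[symmetric])
  define c where "c k k' = (\<Sum>j<n. a k j * cnj (a k' j) / complex_of_real (lam j))" for k k'
  have rowsum: "(\<Sum>j<n. Q k j) \<le> 1" if "k < K" for k
  proof -
    define T where "T = (\<Sum>j<n. Q k j)"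
    have T0: "0 \<le> T" unfolding T_def Q_def using lam0 by (intro sum_nonneg) auto
    have ckk: "c k k = complex_of_real T"
      unfolding c_def T_def Q_def of_real_sum
      by (intro sum.cong refl) (simp only: of_real_divide cmod_sq)
    have "(\<Sum>k'<K. c k k' * cnj (c k k')) = (\<Sum>k'<K. \<Sum>l<n. \<Sum>j<n.
            (a k j * cnj (a k l) / (complex_of_real (lam j) * complex_of_real (lam l))) * (a k' l * cnj (a k' j)))"
      unfolding c_def by (intro sum.cong refl) (simp add: sum_product mult_ac)
    also have "\<dots> = (\<Sum>l<n. \<Sum>j<n. \<Sum>k'<K.
            (a k j * cnj (a k l) / (complex_of_real (lam j) * complex_of_real (lam l))) * (a k' l * cnj (a k' j)))"
      by (rule sum_swap3')
    also have "\<dots> = (\<Sum>l<n. \<Sum>j<n.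
            (a k j * cnj (a k l) / (complex_of_real (lam j) * complex_of_real (lam l))) * (if l = j then complex_of_real (lam l) else 0))"
      by (intro sum.cong refl) (subst sum_distrib_left[symmetric], simp add: F1)
    also have "\<dots> = (\<Sum>l<n. \<Sum>j<n. if j = l then a k l * cnj (a k l) / complex_of_real (lam l) else 0)"
    proof (intro sum.cong refl)
      fix l j
      show "(a k j * cnj (a k l) / (complex_of_real (lam j) * complex_of_real (lam l))) * (if l = j then complex_of_real (lam l) else 0)
         = (if j = l then a k l * cnj (a k l) / complex_of_real (lam l) else 0)"
        by (cases "lam l = 0") (auto simp: field_simps)
    qed
    also have "\<dots> = (\<Sum>j<n. a k j * cnj (a k j) / complex_of_real (lam j))"
      by simp
    also have "\<dots> = c k k" unfolding c_def ..
    finally have sq: "(\<Sum>k'<K. c k k' * cnj (c k k')) = complex_of_real T" using ckk by simp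
    have "T = (\<Sum>k'<K. (cmod (c k k'))\<^sup>2)"
      using sq unfolding of_real_nsq[symmetric] using of_real_eq_iff by metis
    also have "\<dots> \<ge> (cmod (c k k))\<^sup>2"
      using that by (intro member_le_sum) auto
    finally have "T * T \<le> T" using ckk T0 by (simp add: power2_eq_square abs_of_nonneg)
    hence "T \<le> 1" using T0 by (cases "T = 0") (auto simp: mult_le_cancel_right1 )
    thus ?thesis unfolding T_def .
  qed
  have "(\<Sum>j<n. eta (lam j)) \<le> (\<Sum>k<K. eta (\<Sum>j<n. Q k j * lam j))"
  proof (rule eta_core)
    fix k j assume "k \<in> {..<K}" "j \<in> {..<n}"
    thus "0 \<le> Q k j" unfolding Q_def using lam0 by auto
  qed (use lam0 colsum rowsum in auto)
  also have "\<dots> = (\<Sum>k<K. eta (nsq n (M k)))"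
    by (intro sum.cong refl) (simp add: Qlam F2[symmetric])
  finally show ?thesis .
qed

lemma delta_sum1: fixes i n :: nat and f :: "nat \<Rightarrow> complex"
  shows "i < n \<Longrightarrow> (\<Sum>k<n. (if i = k then 1 else 0) * f k) = f i"
proof -
  assume "i < n"
  have "(\<Sum>k<n. (if i = k then 1 else 0) * f k) = (\<Sum>k<n. if k = i then f k else 0)" by (rule sum.cong) auto
  also have "\<dots> = f i" using \<open>i < n\<close> by simp
  finally show ?thesis .
qed

lemma delta_sum2: fixes j n :: nat and f :: "nat \<Rightarrow> complex"
  shows "j < n \<Longrightarrow> (\<Sum>k<n. f k * (if k = j then 1 else 0)) = f j"
proof -
  assume "j < n"
  have "(\<Sum>k<n. f k * (if k = j then 1 else 0)) = (\<Sum>k<n. if k = j then f k else 0)" by (rule sum.cong) auto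
  also have "\<dots> = f j" using \<open>j < n\<close> by simp
  finally show ?thesis .
qed

lemma householder:
  fixes w :: "nat \<Rightarrow> complex"
  assumes n: "0 < n" and w1: "(\<Sum>i<n. w i * cnj (w i)) = 1"
  shows "\<exists>H c. (\<forall>i<n. \<forall>j<n. H j i = cnj (H i j)) \<and>
     (\<forall>i<n. \<forall>j<n. (\<Sum>k<n. H i k * H k j) = (if i = j then 1 else 0)) \<and> c \<noteq> 0 \<and> (\<forall>i<n. H i 0 = c * w i)"
proof -
  define r where "r = cmod (w 0)"
  define c0 where "c0 = (if w 0 = 0 then 1 else w 0 / complex_of_real r)"
  have "cmod c0 = 1" unfolding c0_def r_def by (simp add: norm_divide)
  hence c1: "cnj c0 * c0 = 1" using cmod_sq[of c0] by (simp add: mult.commute)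
  have c2: "w 0 = c0 * complex_of_real r"
    unfolding c0_def r_def by auto
  define u where "u i = w i - (if i = 0 then c0 else 0)" for i
  define Nu where "Nu = (\<Sum>i<n. u i * cnj (u i))"
  define t where "t = 2 / Nu"
  define H where "H i j = (if i = j then 1 else 0) - t * u i * cnj (u j)" for i j
  have cNu: "cnj Nu = Nu" unfolding Nu_def by (simp add: mult.commute)
  have ct: "cnj t = t" unfolding t_def using cNu by simp
  have Nu_eq: "Nu = 2 - 2 * complex_of_real r"
  proof -
    have "Nu = (\<Sum>i<n. w i * cnj (w i) - (if i = 0 then c0 * cnj (w i) + w i * cnj c0 else 0) + (if i = 0 then c0 * cnj c0 else 0))"
      unfolding Nu_def u_def by (intro sum.cong refl) (auto simp: algebra_simps)
    also have "\<dots> = 1 - (c0 * cnj (w 0) + w 0 * cnj c0) + c0 * cnj c0"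
      using n w1 by (simp add: sum.distrib sum_subtractf sum.delta)
    also have "\<dots> = 2 - 2 * complex_of_real r"
      using c1 unfolding c2 by (simp add: algebra_simps)
    finally show ?thesis .
  qed
  have tt: "t * t * Nu = 2 * t" unfolding t_def by (cases "Nu = 0") (auto simp: field_simps)
  have herm: "\<forall>i<n. \<forall>j<n. H j i = cnj (H i j)"
    unfolding H_def using ct by (auto simp: mult_ac)
  have unit: "\<forall>i<n. \<forall>j<n. (\<Sum>k<n. H i k * H k j) = (if i = j then 1 else 0)"
  proof (intro allI impI)
    fix i j assume ij: "i < n" "j < n"
    have "(\<Sum>k<n. H i k * H k j) = (\<Sum>k<n. (if i = k then 1 else 0) * (if k = j then 1 else 0)
        - (if i = k then 1 else 0) * (t * u k * cnj (u j)) - (t * u i * cnj (u k)) * (if k = j then 1 else 0)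
        + (t * t * u i * cnj (u j)) * (u k * cnj (u k)))"
      unfolding H_def by (intro sum.cong refl) (simp add: algebra_simps)
    also have "\<dots> = (if i = j then 1 else 0) - t * u i * cnj (u j) - t * u i * cnj (u j) + t * t * u i * cnj (u j) * Nu"
      using ij by (simp add: sum.distrib sum_subtractf delta_sum1 delta_sum2 sum_distrib_left[symmetric] Nu_def)
    also have "\<dots> = (if i = j then 1 else 0)"
    proof -
      have "t * t * u i * cnj (u j) * Nu = (t * t * Nu) * (u i * cnj (u j))" by (simp add: mult_ac)
      also have "\<dots> = 2 * t * u i * cnj (u j)" unfolding tt by (simp add: mult_ac)
      finally show ?thesis by simp
    qed
    finally show "(\<Sum>k<n. H i k * H k j) = (if i = j then 1 else 0)" .
  qed
  have col: "\<forall>i<n. H i 0 = cnj c0 * w i"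
  proof (cases "Nu = 0")
    case True
    hence "complex_of_real (\<Sum>i<n. (cmod (u i))\<^sup>2) = 0" unfolding Nu_def of_real_nsq .
    hence "(\<Sum>i<n. (cmod (u i))\<^sup>2) = 0" by (simp only: of_real_eq_0_iff)
    hence u0: "\<And>i. i < n \<Longrightarrow> u i = 0" by (subst (asm) sum_nonneg_eq_0_iff) auto
    show ?thesis
    proof (intro allI impI)
      fix i assume "i < n"
      have "w i = (if i = 0 then c0 else 0)" using u0[OF \<open>i<n\<close>] unfolding u_def by simp
      thus "H i 0 = cnj c0 * w i" unfolding H_def using u0[OF \<open>i<n\<close>] c1 by (auto simp: mult.commute)
    qed
  next
    case False
    have tu: "t * cnj (u 0) = - cnj c0"
    proof -
      have e: "cnj (u 0) = cnj c0 * complex_of_real r - cnj c0"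
        unfolding u_def using c2 c1 by (simp add: algebra_simps)
      have d: "2 - 2 * complex_of_real r \<noteq> 0" using False Nu_eq by simp
      have "t * cnj (u 0) = 2 * (cnj c0 * complex_of_real r - cnj c0) / (2 - 2 * complex_of_real r)"
        unfolding t_def Nu_eq e by simp
      also have "\<dots> = - cnj c0" using d by (simp add: field_simps)
      finally show ?thesis .
    qed
    show ?thesis
    proof (intro allI impI)
      fix i assume "i < n"
      have "t * u i * cnj (u 0) = u i * (t * cnj (u 0))" by (simp add: mult_ac)
      hence "H i 0 = (if i = 0 then 1 else 0) + cnj c0 * u i"
        unfolding H_def tu by (simp add: mult.commute)
      thus "H i 0 = cnj c0 * w i" unfolding u_def using c1 by (cases "i = 0") (auto simp: algebra_simps)
    qed
  qed
  have "cnj c0 \<noteq> 0" using c1 by auto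
  thus ?thesis using herm unit col by blast
qed

definition mm :: "nat \<Rightarrow> (nat \<Rightarrow> nat \<Rightarrow> complex) \<Rightarrow> (nat \<Rightarrow> nat \<Rightarrow> complex) \<Rightarrow> nat \<Rightarrow> nat \<Rightarrow> complex" where
  "mm n A B i j = (\<Sum>k<n. A i k * B k j)"

definition adj :: "(nat \<Rightarrow> nat \<Rightarrow> complex) \<Rightarrow> nat \<Rightarrow> nat \<Rightarrow> complex" where
  "adj A i j = cnj (A j i)"

definition idm :: "nat \<Rightarrow> nat \<Rightarrow> complex" where
  "idm i j = (if i = j then 1 else 0)"

definition dg :: "(nat \<Rightarrow> real) \<Rightarrow> nat \<Rightarrow> nat \<Rightarrow> complex" where
  "dg lam i j = (if i = j then complex_of_real (lam i) else 0)"

definition meq :: "nat \<Rightarrow> (nat \<Rightarrow> nat \<Rightarrow> complex) \<Rightarrow> (nat \<Rightarrow> nat \<Rightarrow> complex) \<Rightarrow> bool" where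
  "meq n A B \<longleftrightarrow> (\<forall>i<n. \<forall>j<n. A i j = B i j)"

lemma meq_refl[simp]: "meq n A A" by (simp add: meq_def)
lemma meq_sym: "meq n A B \<Longrightarrow> meq n B A" by (simp add: meq_def)
lemma meq_trans[trans]: "meq n A B \<Longrightarrow> meq n B C \<Longrightarrow> meq n A C" by (simp add: meq_def)
lemma meq_eq_trans[trans]: "A = B \<Longrightarrow> meq n B C \<Longrightarrow> meq n A C" by simp
lemma eq_meq_trans[trans]: "meq n A B \<Longrightarrow> B = C \<Longrightarrow> meq n A C" by simp

lemma mm_assoc: "mm n (mm n A B) C = mm n A (mm n B C)"
proof (intro ext)
  fix i j
  have "(\<Sum>k<n. (\<Sum>l<n. A i l * B l k) * C k j) = (\<Sum>k<n. \<Sum>l<n. A i l * B l k * C k j)"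
    by (simp add: sum_distrib_right)
  also have "\<dots> = (\<Sum>l<n. \<Sum>k<n. A i l * B l k * C k j)" by (rule sum.swap)
  also have "\<dots> = (\<Sum>l<n. A i l * (\<Sum>k<n. B l k * C k j))" by (simp add: sum_distrib_left mult.assoc)
  finally show "mm n (mm n A B) C i j = mm n A (mm n B C) i j" unfolding mm_def .
qed

lemma mm_cong: "meq n A A' \<Longrightarrow> meq n B B' \<Longrightarrow> meq n (mm n A B) (mm n A' B')"
  unfolding meq_def mm_def by auto

lemma mm_idl: "meq n (mm n idm A) A"
  unfolding meq_def mm_def idm_def using delta_sum1 by (simp add: delta_sum1)

lemma mm_idr: "meq n (mm n A idm) A"
  unfolding meq_def mm_def idm_def
proof (intro allI impI)
  fix i j assume "i < n" "j < n"
  show "(\<Sum>k<n. A i k * (if k = j then 1 else 0)) = A i j" using delta_sum2[OF \<open>j<n\<close>] by simp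
qed

lemma adj_mm: "adj (mm n A B) = mm n (adj B) (adj A)"
  unfolding adj_def mm_def by (intro ext) (simp add: mult.commute)

lemma adj_adj[simp]: "adj (adj A) = A" unfolding adj_def by (intro ext) simp

lemma mm_dg: "j < n \<Longrightarrow> mm n U (dg lam) i j = U i j * complex_of_real (lam j)"
  unfolding mm_def dg_def using delta_sum2[of j n "\<lambda>k. U i k * complex_of_real (lam k)"]
  by (simp add: if_distrib cong: if_cong)

lemma colc_meq: "colc n U \<longleftrightarrow> meq n (mm n (adj U) U) idm"
  unfolding colc_def meq_def mm_def adj_def idm_def ..

lemma rowc_meq: "rowc n U \<longleftrightarrow> meq n (mm n U (adj U)) idm"
  unfolding rowc_def meq_def mm_def adj_def idm_def ..

lemma SD_meq: "SD n R U lam \<longleftrightarrow> colc n U \<and> rowc n U \<and> meq n R (mm n (mm n U (dg lam)) (adj U))"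
proof -
  have "(\<forall>i<n. \<forall>i'<n. R i i' = (\<Sum>j<n. U i j * complex_of_real (lam j) * cnj (U i' j)))
     \<longleftrightarrow> meq n R (mm n (mm n U (dg lam)) (adj U))"
    unfolding meq_def by (simp add: mm_def[of n "mm n U (dg lam)"] mm_dg adj_def)
  thus ?thesis unfolding SD_def by simp
qed

lemma eigen_exists:
  fixes R :: "nat \<Rightarrow> nat \<Rightarrow> complex"
  assumes "0 < n"
  shows "\<exists>e x. (\<exists>i<n. x i \<noteq> 0) \<and> (\<forall>i<n. (\<Sum>j<n. R i j * x j) = e * x i)"
proof -
  define A :: "complex mat" where "A = mat n n (\<lambda>(i,j). R i j)"
  have A: "A \<in> carrier_mat n n" by (simp add: A_def)
  have "degree (char_poly A) = n" using degree_monic_char_poly[OF A] by simp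
  hence "\<not> constant (poly (char_poly A))" using assms by (simp add: constant_degree)
  then obtain e where "poly (char_poly A) e = 0" using fundamental_theorem_of_algebra by blast
  hence "eigenvalue A e" using eigenvalue_root_char_poly[OF A] by simp
  then obtain v where ev: "eigenvector A v e" unfolding eigenvalue_def by blast
  hence v: "v \<in> carrier_vec n" "v \<noteq> 0\<^sub>v n" "A *\<^sub>v v = e \<cdot>\<^sub>v v" unfolding eigenvector_def using A by auto
  have "\<exists>i<n. v $ i \<noteq> 0"
  proof (rule ccontr)
    assume "\<not> ?thesis"
    hence "v = 0\<^sub>v n" using v(1) by (intro eq_vecI) auto
    thus False using v(2) by simp
  qed
  moreover have "\<forall>i<n. (\<Sum>j<n. R i j * v $ j) = e * v $ i"
  proof (intro allI impI)
    fix i assume i: "i < n"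
    have "(A *\<^sub>v v) $ i = (e \<cdot>\<^sub>v v) $ i" using v(3) by simp
    thus "(\<Sum>j<n. R i j * v $ j) = e * v $ i"
      using i v(1) by (simp add: A_def scalar_prod_def atLeast0LessThan)
  qed
  ultimately show ?thesis by blast
qed

lemma mm_congL: "meq n X Y \<Longrightarrow> meq n (mm n Z X) (mm n Z Y)"
  by (rule mm_cong) auto
lemma mm_congR: "meq n X Y \<Longrightarrow> meq n (mm n X Z) (mm n Y Z)"
  by (rule mm_cong) auto

lemma cancel: "meq n (mm n A B) idm \<Longrightarrow> meq n (mm n A (mm n B X)) X"
proof -
  assume a: "meq n (mm n A B) idm"
  have "mm n A (mm n B X) = mm n (mm n A B) X" by (simp add: mm_assoc)
  also have "meq n \<dots> (mm n idm X)" by (rule mm_congR[OF a])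
  also have "meq n \<dots> X" by (rule mm_idl)
  finally show ?thesis .
qed

lemma cancel_r: "meq n (mm n A B) idm \<Longrightarrow> meq n (mm n X (mm n A B)) X"
proof -
  assume a: "meq n (mm n A B) idm"
  have "meq n (mm n X (mm n A B)) (mm n X idm)" by (rule mm_congL[OF a])
  also have "meq n \<dots> X" by (rule mm_idr)
  finally show ?thesis .
qed

lemma SD_conj:
  assumes hermH: "meq n (adj H) H" and unitH: "meq n (mm n H H) idm"
    and SD': "SD n (mm n (mm n H R) H) U' lam"
  shows "SD n R (mm n H U') lam"
proof -
  let ?U = "mm n H U'"
  let ?A = "mm n (mm n H R) H"
  have col': "meq n (mm n (adj U') U') idm" and row': "meq n (mm n U' (adj U')) idm"
    and A': "meq n ?A (mm n (mm n U' (dg lam)) (adj U'))"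
    using SD' unfolding SD_meq colc_meq rowc_meq by auto
  have aH: "meq n (mm n (adj H) H) idm"
  proof -
    have "meq n (mm n (adj H) H) (mm n H H)" by (rule mm_congR[OF hermH])
    thus ?thesis using unitH meq_trans by blast
  qed
  have aH2: "meq n (mm n H (adj H)) idm"
  proof -
    have "meq n (mm n H (adj H)) (mm n H H)" by (rule mm_congL[OF hermH])
    thus ?thesis using unitH meq_trans by blast
  qed
  have "colc n ?U"
  proof -
    have "mm n (adj ?U) ?U = mm n (adj U') (mm n (adj H) (mm n H U'))" by (simp add: adj_mm mm_assoc)
    also have "meq n \<dots> (mm n (adj U') U')" by (rule mm_congL, rule cancel[OF aH])
    also have "meq n \<dots> idm" by (rule col')
    finally show ?thesis unfolding colc_meq .
  qed
  moreover have "rowc n ?U"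
  proof -
    have "mm n ?U (adj ?U) = mm n H (mm n U' (mm n (adj U') (adj H)))" by (simp add: adj_mm mm_assoc)
    also have "meq n \<dots> (mm n H (adj H))" by (rule mm_congL, rule cancel[OF row'])
    also have "meq n \<dots> idm" by (rule aH2)
    finally show ?thesis unfolding rowc_meq .
  qed
  moreover have "meq n R (mm n (mm n ?U (dg lam)) (adj ?U))"
  proof -
    have "mm n (mm n ?U (dg lam)) (adj ?U) = mm n H (mm n (mm n (mm n U' (dg lam)) (adj U')) (adj H))"
      by (simp add: adj_mm mm_assoc)
    also have "meq n \<dots> (mm n H (mm n ?A (adj H)))"
      by (rule mm_congL, rule mm_congR, rule meq_sym, rule A')
    also have "meq n \<dots> (mm n H (mm n ?A H))"
      by (rule mm_congL, rule mm_congL, rule hermH)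
    also have "mm n H (mm n ?A H) = mm n (mm n H H) (mm n R (mm n H H))"
      by (simp add: mm_assoc)
    also have "meq n \<dots> (mm n idm (mm n R idm))"
      by (rule mm_cong[OF unitH], rule mm_congL[OF unitH])
    also have "meq n \<dots> (mm n R idm)" by (rule mm_idl)
    also have "meq n \<dots> R" by (rule mm_idr)
    finally show ?thesis by (rule meq_sym)
  qed
  ultimately show ?thesis unfolding SD_meq by blast
qed

lemma SD_block:
  fixes A A3 U3 :: "nat \<Rightarrow> nat \<Rightarrow> complex" and lam3 :: "nat \<Rightarrow> real"
  assumes SD3: "SD m A3 U3 lam3"
   and A00: "A 0 0 = complex_of_real r" and A0l: "\<forall>l<m. A 0 (Suc l) = 0" and Ak0: "\<forall>k<m. A (Suc k) 0 = 0"
   and A3: "\<forall>a<m. \<forall>b<m. A (Suc a) (Suc b) = A3 a b"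
  defines "U' \<equiv> (\<lambda>k j. if k = 0 then (if j = 0 then 1 else 0) else if j = 0 then 0 else U3 (k-1) (j-1))"
    and "lam' \<equiv> (\<lambda>j. if j = 0 then r else lam3 (j - 1))"
  shows "SD (Suc m) A U' lam'"
proof -
  have col3: "\<And>j l. j < m \<Longrightarrow> l < m \<Longrightarrow> (\<Sum>i<m. cnj (U3 i j) * U3 i l) = (if j = l then 1 else 0)"
    and row3: "\<And>i i'. i < m \<Longrightarrow> i' < m \<Longrightarrow> (\<Sum>j<m. U3 i j * cnj (U3 i' j)) = (if i = i' then 1 else 0)"
    and R3: "\<And>i i'. i < m \<Longrightarrow> i' < m \<Longrightarrow> A3 i i' = (\<Sum>j<m. U3 i j * complex_of_real (lam3 j) * cnj (U3 i' j))"
    using SD3 unfolding SD_def colc_def rowc_def by auto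
  have U'0: "U' 0 0 = 1" "\<And>j. U' 0 (Suc j) = 0" "\<And>k. U' (Suc k) 0 = 0" "\<And>k j. U' (Suc k) (Suc j) = U3 k j"
    unfolding U'_def by auto
  have L0: "lam' 0 = r" "\<And>j. lam' (Suc j) = lam3 j" unfolding lam'_def by auto
  have "colc (Suc m) U'"
    unfolding colc_def
  proof (intro allI impI)
    fix j l assume j: "j < Suc m" and l: "l < Suc m"
    show "(\<Sum>i<Suc m. cnj (U' i j) * U' i l) = (if j = l then 1 else 0)"
      using j l by (cases j; cases l) (simp_all only: sum.lessThan_Suc_shift U'0, simp_all add: col3)
  qed
  moreover have "rowc (Suc m) U'"
    unfolding rowc_def
  proof (intro allI impI)
    fix j l assume j: "j < Suc m" and l: "l < Suc m"
    show "(\<Sum>i<Suc m. U' j i * cnj (U' l i)) = (if j = l then 1 else 0)"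
      using j l by (cases j; cases l) (simp_all only: sum.lessThan_Suc_shift U'0, simp_all add: row3)
  qed
  moreover have "\<forall>i<Suc m. \<forall>i'<Suc m. A i i' = (\<Sum>j<Suc m. U' i j * complex_of_real (lam' j) * cnj (U' i' j))"
  proof (intro allI impI)
    fix j l assume j: "j < Suc m" and l: "l < Suc m"
    show "A j l = (\<Sum>i<Suc m. U' j i * complex_of_real (lam' i) * cnj (U' l i))"
    proof (cases j)
      case 0
      show ?thesis
      proof (cases l)
        case 0 thus ?thesis using \<open>j = 0\<close> A00 by (simp add: U'0 L0 sum.lessThan_Suc_shift del: sum.lessThan_Suc)
      next
        case (Suc l') thus ?thesis using \<open>j = 0\<close> A0l l by (simp add: U'0 L0 sum.lessThan_Suc_shift del: sum.lessThan_Suc)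
      qed
    next
      case (Suc j')
      show ?thesis
      proof (cases l)
        case 0 thus ?thesis using \<open>j = Suc j'\<close> Ak0 j by (simp add: U'0 L0 sum.lessThan_Suc_shift del: sum.lessThan_Suc)
      next
        case (Suc l') thus ?thesis using \<open>j = Suc j'\<close> A3 R3 j l by (simp add: U'0 L0 sum.lessThan_Suc_shift del: sum.lessThan_Suc)
      qed
    qed
  qed
  ultimately show ?thesis unfolding SD_def by blast
qed

lemma spectral:
  fixes R :: "nat \<Rightarrow> nat \<Rightarrow> complex"
  assumes "\<forall>i<n. \<forall>j<n. R i j = cnj (R j i)"
  shows "\<exists>U lam. SD n R U lam"
  using assms
proof (induction n arbitrary: R)
  case 0
  show ?case by (auto simp: SD_def colc_def rowc_def)
next
  case (Suc m R)
  define n where "n = Suc m"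
  have n0: "0 < n" unfolding n_def by simp
  have hermR: "meq n (adj R) R" unfolding meq_def adj_def
  proof (intro allI impI)
    fix i j assume "i < n" "j < n"
    thus "cnj (R j i) = R i j" using Suc.prems unfolding n_def by (metis complex_cnj_cnj)
  qed
  obtain e x where x0: "\<exists>i<n. x i \<noteq> 0" and ex: "\<forall>i<n. (\<Sum>j<n. R i j * x j) = e * x i"
    using eigen_exists[OF n0, of R] by auto
  define Nr where "Nr = (\<Sum>i<n. (cmod (x i))\<^sup>2)"
  have Nr: "0 < Nr"
  proof -
    obtain i0 where i0: "i0 < n" "x i0 \<noteq> 0" using x0 by auto
    have "(cmod (x i0))\<^sup>2 \<le> Nr" unfolding Nr_def using i0 by (intro member_le_sum) auto
    moreover have "0 < (cmod (x i0))\<^sup>2" using i0 by simp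
    ultimately show ?thesis by linarith
  qed
  define s where "s = complex_of_real (sqrt Nr)"
  have s0: "s \<noteq> 0" unfolding s_def using Nr by simp
  have ss: "s * cnj s = complex_of_real Nr" unfolding s_def using Nr
    by (simp flip: of_real_mult)
  define w where "w i = x i / s" for i
  have w1: "(\<Sum>i<n. w i * cnj (w i)) = 1"
  proof -
    have "(\<Sum>i<n. w i * cnj (w i)) = (\<Sum>i<n. x i * cnj (x i)) / (s * cnj s)"
      unfolding w_def by (simp add: sum_divide_distrib)
    also have "\<dots> = complex_of_real Nr / complex_of_real Nr" unfolding ss Nr_def of_real_nsq ..
    finally show ?thesis using Nr by simp
  qed
  have ew: "\<forall>i<n. (\<Sum>j<n. R i j * w j) = e * w i"
    using ex unfolding w_def by (simp add: sum_divide_distrib[symmetric] mult.assoc)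
  obtain H c where hH: "\<forall>i<n. \<forall>j<n. H j i = cnj (H i j)"
    and uH: "\<forall>i<n. \<forall>j<n. (\<Sum>k<n. H i k * H k j) = (if i = j then 1 else 0)"
    and c0: "c \<noteq> 0" and colH: "\<forall>i<n. H i 0 = c * w i"
    using householder[OF n0 w1] by blast
  have hermH: "meq n (adj H) H" unfolding meq_def adj_def
  proof (intro allI impI)
    fix i j assume "i < n" "j < n"
    thus "cnj (H j i) = H i j" using hH by (metis complex_cnj_cnj)
  qed
  have unitH: "meq n (mm n H H) idm" using uH unfolding meq_def mm_def idm_def by auto
  have eH: "mm n R H i 0 = e * H i 0" if "i < n" for i
  proof -
    have "mm n R H i 0 = (\<Sum>j<n. R i j * (c * w j))" unfolding mm_def using colH by simp
    also have "\<dots> = c * (\<Sum>j<n. R i j * w j)" by (simp add: sum_distrib_left mult_ac)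
    also have "\<dots> = e * H i 0" using ew that colH by simp
    finally show ?thesis .
  qed
  define A where "A = mm n (mm n H R) H"
  have Acol: "A k 0 = e * idm k 0" if "k < n" for k
  proof -
    have "A k 0 = mm n H (mm n R H) k 0" unfolding A_def by (simp add: mm_assoc)
    also have "\<dots> = (\<Sum>i<n. H k i * (e * H i 0))" unfolding mm_def[of n H] using eH by simp
    also have "\<dots> = e * mm n H H k 0" unfolding mm_def by (simp add: sum_distrib_left mult_ac)
    also have "\<dots> = e * idm k 0" using unitH that n0 unfolding meq_def by simp
    finally show ?thesis .
  qed
  have Aherm: "meq n (adj A) A"
  proof -
    have "adj A = mm n (adj H) (mm n (adj R) (adj H))" unfolding A_def by (simp add: adj_mm mm_assoc)
    also have "meq n \<dots> (mm n H (mm n R H))"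
      by (rule mm_cong[OF hermH], rule mm_cong[OF hermR hermH])
    also have "\<dots> = A" unfolding A_def by (simp add: mm_assoc)
    finally show ?thesis .
  qed
  hence Ah: "\<And>k l. k < n \<Longrightarrow> l < n \<Longrightarrow> A k l = cnj (A l k)"
    unfolding meq_def adj_def by (metis complex_cnj_cnj)
  have A00: "A 0 0 = e" using Acol[OF n0] by (simp add: idm_def)
  have ereal: "cnj e = e" using Ah[OF n0 n0] A00 by simp
  have eRe: "e = complex_of_real (Re e)" using ereal by (metis Reals_cnj_iff complex_is_Real_iff of_real_Re)
  define A3 where "A3 a b = A (Suc a) (Suc b)" for a b
  have h3: "\<forall>i<m. \<forall>j<m. A3 i j = cnj (A3 j i)" unfolding A3_def
  proof (intro allI impI)
    fix i j assume "i < m" "j < m"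
    hence "Suc i < n" "Suc j < n" unfolding n_def by auto
    thus "A (Suc i) (Suc j) = cnj (A (Suc j) (Suc i))" by (rule Ah)
  qed
  obtain U3 lam3 where SD3: "SD m A3 U3 lam3" using Suc.IH[OF h3] by blast
  define U' where "U' = (\<lambda>k j. if k = 0 then (if j = 0 then 1 else 0) else if j = 0 then 0 else U3 (k-1) (j-1))"
  define lam' where "lam' = (\<lambda>j. if j = 0 then Re e else lam3 (j - 1))"
  have "SD (Suc m) A U' lam'"
    unfolding U'_def lam'_def
  proof (rule SD_block[OF SD3])
    show "A 0 0 = complex_of_real (Re e)" using A00 eRe by simp
    show "\<forall>l<m. A 0 (Suc l) = 0"
    proof (intro allI impI)
      fix l assume "l < m"
      hence "Suc l < n" unfolding n_def by simp
      hence "A 0 (Suc l) = cnj (A (Suc l) 0)" using Ah[OF n0] by blast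
      also have "A (Suc l) 0 = 0" using Acol[OF \<open>Suc l < n\<close>] by (simp add: idm_def)
      finally show "A 0 (Suc l) = 0" by simp
    qed
    show "\<forall>k<m. A (Suc k) 0 = 0" using Acol n_def by (simp add: idm_def)
    show "\<forall>a<m. \<forall>b<m. A (Suc a) (Suc b) = A3 a b" unfolding A3_def by simp
  qed
  hence "SD n R (mm n H U') lam'"
    unfolding n_def[symmetric] A_def by (rule SD_conj[OF hermH unitH])
  thus ?case unfolding n_def by blast
qed

definition Sf :: "nat \<Rightarrow> (nat \<Rightarrow> nat \<Rightarrow> complex) \<Rightarrow> real" where
  "Sf n R = vN_entropy (mat n n (\<lambda>(i,j). R i j))"

lemma Sf_cong: "meq n R R' \<Longrightarrow> Sf n R = Sf n R'"
proof -
  assume "meq n R R'"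
  hence "mat n n (\<lambda>(i,j). R i j) = mat n n (\<lambda>(i,j). R' i j)" unfolding meq_def by (intro eq_matI) auto
  thus ?thesis unfolding Sf_def by simp
qed

lemma Sf_transpose: "Sf n (\<lambda>i j. R j i) = Sf n R"
proof -
  have "mat n n (\<lambda>(i,j). R j i) = transpose_mat (mat n n (\<lambda>(i,j). R i j))" by (intro eq_matI) auto
  moreover have "char_poly (transpose_mat (mat n n (\<lambda>(i,j). R i j))) = char_poly (mat n n (\<lambda>(i,j). R i j))"
    by (rule char_poly_transpose_mat[of _ n]) simp
  ultimately show ?thesis unfolding Sf_def vN_entropy_def by simp
qed

lemma order_linear: "order z [:- a, 1:] = (if z = a then 1 else 0)"
proof (cases "z = a")
  case True thus ?thesis using order_power_n_n[of a 1] by simp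
next
  case False
  have "poly [:- a, 1:] z \<noteq> 0" using False by simp
  thus ?thesis using False by (simp add: order_0I)
qed

lemma order_prod_linear:
  fixes c :: "nat \<Rightarrow> complex"
  shows "order z (\<Prod>i<n. [:- c i, 1:]) = card {i. i < n \<and> c i = z}"
proof (induction n)
  case 0 thus ?case by simp
next
  case (Suc n)
  have p0: "(\<Prod>i<n. [:- c i, 1:]) \<noteq> 0" by (simp add: prod_zero_iff)
  have l0: "[:- c n, 1:] \<noteq> 0" by simp
  have nz: "(\<Prod>i<n. [:- c i, 1:]) * [:- c n, 1:] \<noteq> 0"
    using p0 l0 by (metis mult_eq_0_iff)
  have "order z (\<Prod>i<Suc n. [:- c i, 1:]) = order z ((\<Prod>i<n. [:- c i, 1:]) * [:- c n, 1:])"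
    by (simp only: prod.lessThan_Suc)
  also have "\<dots> = order z (\<Prod>i<n. [:- c i, 1:]) + order z [:- c n, 1:]"
    by (rule order_mult[OF nz])
  also have "\<dots> = card {i. i < n \<and> c i = z} + (if z = c n then 1 else 0)"
    using Suc.IH by (simp add: order_linear)
  also have "\<dots> = card {i. i < Suc n \<and> c i = z}"
  proof (cases "c n = z")
    case True
    have "{i. i < Suc n \<and> c i = z} = insert n {i. i < n \<and> c i = z}" using True by auto
    thus ?thesis using True by simp
  next
    case False
    have "{i. i < Suc n \<and> c i = z} = {i. i < n \<and> c i = z}" using False less_Suc_eq by auto
    thus ?thesis using False by auto
  qed
  finally show ?case .
qed

lemma vN_prod_linear:
  fixes lam :: "nat \<Rightarrow> real"
  assumes "char_poly A = (\<Prod>i<n. [:- complex_of_real (lam i), 1:])"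
  shows "vN_entropy A = (\<Sum>i<n. eta (lam i))"
proof -
  define c where "c i = complex_of_real (lam i)" for i
  define p where "p = (\<Prod>i<n. [:- c i, 1:])"
  have cp: "char_poly A = p" unfolding p_def c_def using assms by simp
  have roots: "{z. poly p z = 0} = c ` {..<n}"
    unfolding p_def poly_prod by (auto simp: prod_zero_iff)
  have "(\<Sum>z\<in>{z. poly p z = 0}. real (order z p) * xlog2x (Re z))
      = (\<Sum>z\<in>c ` {..<n}. \<Sum>i\<in>{i\<in>{..<n}. c i = z}. xlog2x (Re (c i)))"
  proof (unfold roots, rule sum.cong[OF refl])
    fix z assume "z \<in> c ` {..<n}"
    have "order z p = card {i\<in>{..<n}. c i = z}" unfolding p_def order_prod_linear by simp
    moreover have "(\<Sum>i\<in>{i\<in>{..<n}. c i = z}. xlog2x (Re (c i))) = (\<Sum>i\<in>{i\<in>{..<n}. c i = z}. xlog2x (Re z))"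
      by (rule sum.cong) auto
    ultimately show "real (order z p) * xlog2x (Re z) = (\<Sum>i\<in>{i\<in>{..<n}. c i = z}. xlog2x (Re (c i)))"
      by simp
  qed
  also have "\<dots> = (\<Sum>i<n. xlog2x (Re (c i)))"
    by (rule sum.image_gen[symmetric]) simp
  finally show ?thesis unfolding vN_entropy_def cp eta_def c_def
    by (simp add: sum_negf)
qed

lemma vN_SD: assumes "SD n R U lam" shows "Sf n R = (\<Sum>j<n. eta (lam j))"
proof -
  have col: "\<And>j l. j < n \<Longrightarrow> l < n \<Longrightarrow> (\<Sum>i<n. cnj (U i j) * U i l) = (if j = l then 1 else 0)"
    and row: "\<And>i i'. i < n \<Longrightarrow> i' < n \<Longrightarrow> (\<Sum>j<n. U i j * cnj (U i' j)) = (if i = i' then 1 else 0)"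
    and R: "\<And>i i'. i < n \<Longrightarrow> i' < n \<Longrightarrow> R i i' = (\<Sum>j<n. U i j * complex_of_real (lam j) * cnj (U i' j))"
    using assms unfolding SD_def colc_def rowc_def by auto
  define A :: "complex mat" where "A = mat n n (\<lambda>(i,j). R i j)"
  define Um :: "complex mat" where "Um = mat n n (\<lambda>(i,j). U i j)"
  define Uh :: "complex mat" where "Uh = mat n n (\<lambda>(i,j). cnj (U j i))"
  define Dm :: "complex mat" where "Dm = mat n n (\<lambda>(i,j). if i = j then complex_of_real (lam i) else 0)"
  have carr: "A \<in> carrier_mat n n" "Um \<in> carrier_mat n n" "Uh \<in> carrier_mat n n" "Dm \<in> carrier_mat n n"
    unfolding A_def Um_def Uh_def Dm_def by auto
  have UD: "(Um * Dm) $$ (i, k) = U i k * complex_of_real (lam k)" if "i < n" "k < n" for i k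
  proof -
    have "(Um * Dm) $$ (i, k) = (\<Sum>l<n. U i l * (if l = k then complex_of_real (lam l) else 0))"
      using that unfolding Um_def Dm_def by (simp add: scalar_prod_def atLeast0LessThan)
    also have "\<dots> = U i k * complex_of_real (lam k)"
      using delta_sum2[OF that(2), of "\<lambda>l. U i l * complex_of_real (lam l)"] by (simp add: if_distrib cong: if_cong)
    finally show ?thesis .
  qed
  have "A = Um * Dm * Uh"
  proof (rule eq_matI)
    fix i j assume "i < dim_row (Um * Dm * Uh)" "j < dim_col (Um * Dm * Uh)"
    hence ij: "i < n" "j < n" using carr by auto
    have "(Um * Dm * Uh) $$ (i,j) = (\<Sum>k<n. (Um * Dm) $$ (i, k) * cnj (U j k))"
      using ij carr unfolding Uh_def by (simp add: scalar_prod_def atLeast0LessThan)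
    also have "\<dots> = R i j" using ij by (simp add: UD R)
    finally show "A $$ (i,j) = (Um * Dm * Uh) $$ (i,j)" using ij unfolding A_def by simp
  qed (use carr in auto)
  moreover have "Um * Uh = 1\<^sub>m n"
    by (rule eq_matI) (use carr in \<open>auto simp: Um_def Uh_def scalar_prod_def atLeast0LessThan row\<close>)
  moreover have "Uh * Um = 1\<^sub>m n"
    by (rule eq_matI) (use carr in \<open>auto simp: Um_def Uh_def scalar_prod_def atLeast0LessThan col\<close>)
  ultimately have "similar_mat A Dm" using carr by (intro similar_matI[of _ _ Um Uh n]) auto
  hence "char_poly A = char_poly Dm" by (rule char_poly_similar)
  also have "char_poly Dm = (\<Prod>a\<leftarrow>diag_mat Dm. [:- a, 1:])"
    by (rule char_poly_upper_triangular[OF carr(4)]) (auto simp: Dm_def upper_triangular_def)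
  also have "\<dots> = prod_list (map (\<lambda>i. [:- complex_of_real (lam i), 1:]) [0..<n])"
    unfolding diag_mat_def Dm_def by (auto intro!: arg_cong[where f=prod_list])
  also have "\<dots> = (\<Prod>i<n. [:- complex_of_real (lam i), 1:])"
    by (simp add: prod.distinct_set_conv_list[symmetric] atLeast0LessThan)
  finally have "vN_entropy A = (\<Sum>i<n. eta (lam i))" by (rule vN_prod_linear)
  thus ?thesis unfolding Sf_def A_def .
qed

lemma sum_split_add: fixes n m :: nat shows "(\<Sum>j<n+m. f j) = (\<Sum>j<n. f j) + (\<Sum>j<m. (f (n + j) :: 'a :: comm_monoid_add))"
  by (induction m) (simp_all add: add.assoc)

lemma SD_cong: "meq n R R' \<Longrightarrow> SD n R U lam \<Longrightarrow> SD n R' U lam"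
  unfolding SD_def meq_def by auto

lemma gram_herm_all: "\<forall>i<n. \<forall>j<n. gram K M i j = cnj (gram K M j i)"
  using gram_herm by blast

lemma SD_gram_ex: "\<exists>U lam. SD n (gram K M) U lam"
  by (rule spectral[OF gram_herm_all])

lemma SD_rowc: "SD n R U lam \<Longrightarrow> rowc n U" unfolding SD_def by simp

lemma lam_nsq:
  assumes "SD n (gram K M) U lam" "j < n"
  shows "lam j = nsq K (\<lambda>k. \<Sum>i<n. cnj (M k i) * U i j)"
proof -
  have "complex_of_real (nsq K (\<lambda>k. \<Sum>i<n. cnj (M k i) * U i j)) = complex_of_real (lam j)"
    using transfer(2)[OF SD_rowc[OF assms(1)], where M=M and K=K and j=j] SD_quad[OF assms(1) assms(2) assms(2)] by simp
  thus ?thesis by (simp only: of_real_eq_iff)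
qed

lemma nsq_nonneg: "0 \<le> nsq n v" unfolding nsq_def by (intro sum_nonneg) auto

lemma trace_transfer:
  assumes "rowc n U"
  shows "(\<Sum>j<n. nsq K (\<lambda>k. \<Sum>i<n. cnj (M k i) * U i j)) = (\<Sum>k<K. nsq n (M k))"
proof -
  define W where "W = (\<lambda>j k. \<Sum>i<n. cnj (M k i) * U i j)"
  have "complex_of_real (\<Sum>j<n. nsq K (W j)) = (\<Sum>j<n. \<Sum>k<K. W j k * cnj (W j k))"
    unfolding nsq_def of_real_sum cmod_sq ..
  also have "\<dots> = (\<Sum>k<K. gram n W k k)" unfolding gram_def by (rule sum.swap)
  also have "\<dots> = (\<Sum>k<K. gram n (dualf M) k k)"
    unfolding W_def by (intro sum.cong refl transfer(1)[OF assms])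
  also have "\<dots> = (\<Sum>k<K. \<Sum>i<n. M k i * cnj (M k i))"
    unfolding gram_def dualf_def by (simp add: mult.commute)
  also have "\<dots> = complex_of_real (\<Sum>k<K. nsq n (M k))"
    unfolding nsq_def of_real_sum cmod_sq ..
  finally show ?thesis unfolding W_def by (simp only: of_real_eq_iff)
qed

lemma schmidt_le: "Sf K (gram n (dualf M)) \<le> Sf n (gram K M)"
proof -
  obtain U lam where SD1: "SD n (gram K M) U lam" using SD_gram_ex by blast
  define W where "W = (\<lambda>j k. \<Sum>i<n. cnj (M k i) * U i j)"
  have mW: "meq K (gram n (dualf M)) (gram n W)"
    unfolding meq_def W_def using transfer(1)[OF SD_rowc[OF SD1]] by simp
  obtain V mu where SD2: "SD K (gram n (dualf M)) V mu" using SD_gram_ex by blast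
  have SD2': "SD K (gram n W) V mu" by (rule SD_cong[OF mW SD2])
  have "Sf K (gram n (dualf M)) = (\<Sum>k<K. eta (mu k))" by (rule vN_SD[OF SD2])
  also have "\<dots> \<le> (\<Sum>j<n. eta (nsq K (W j)))" by (rule K_bound[OF SD2'])
  also have "\<dots> = (\<Sum>j<n. eta (lam j))"
    unfolding W_def by (intro sum.cong refl) (simp add: lam_nsq[OF SD1])
  also have "\<dots> = Sf n (gram K M)" by (rule vN_SD[OF SD1, symmetric])
  finally show ?thesis .
qed

lemma dualf_dualf[simp]: "dualf (dualf M) = M" unfolding dualf_def by (intro ext) simp

lemma schmidt: "Sf n (gram K M) = Sf K (gram n (dualf M))"
  using schmidt_le[of K n M] schmidt_le[of n K "dualf M"] by simp

lemma nsq_scale: "nsq K (\<lambda>k. complex_of_real c * v k) = c\<^sup>2 * nsq K v"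
  unfolding nsq_def by (simp add: sum_distrib_left norm_mult power_mult_distrib)

lemma nsq_div: "nsq K (\<lambda>k. v k / complex_of_real c) = nsq K v / c\<^sup>2"
  unfolding nsq_def by (simp add: sum_divide_distrib norm_divide power_divide)

lemma herm_meq_gram:
  assumes "meq n R (gram K M)"
  shows "\<forall>i<n. \<forall>j<n. R i j = cnj (R j i)"
  using assms gram_herm unfolding meq_def by metis

lemma conc:
  fixes M M' R :: "nat \<Rightarrow> nat \<Rightarrow> complex"
  assumes mR: "meq n R (\<lambda>i i'. gram K M i i' + gram K M' i i')"
    and sdef: "s = (\<Sum>k<K. nsq n (M k))" and s'def: "s' = (\<Sum>k<K. nsq n (M' k))"
    and ss: "s + s' = 1" and s0: "0 < s"
  shows "s * Sf n (gram K (\<lambda>k i. M k i / complex_of_real (sqrt s))) \<le> Sf n R"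
proof -
  define MM where "MM k i = (if k < K then M k i else M' (k - K) i)" for k i
  have gMM: "gram (K + K) MM i i' = gram K M i i' + gram K M' i i'" for i i'
    unfolding gram_def MM_def sum_split_add by simp
  have hR: "\<forall>i<n. \<forall>j<n. R i j = cnj (R j i)"
    by (rule herm_meq_gram[of _ _ "K+K" MM]) (use mR gMM in \<open>simp add: meq_def\<close>)
  obtain U nu where SDR: "SD n R U nu" using spectral[OF hR] by blast
  have row: "rowc n U" by (rule SD_rowc[OF SDR])
  define W where "W = (\<lambda>j k. \<Sum>i<n. cnj (M k i) * U i j)"
  define W' where "W' = (\<lambda>j k. \<Sum>i<n. cnj (M' k i) * U i j)"
  define d where "d j = nsq K (W j)" for j
  define d' where "d' j = nsq K (W' j)" for j
  have nu_eq: "nu j = d j + d' j" if j: "j < n" for j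
  proof -
    have "complex_of_real (nu j) = (\<Sum>i<n. \<Sum>i'<n. cnj (U i j) * R i i' * U i' j)"
      using SD_quad[OF SDR j j] by simp
    also have "\<dots> = (\<Sum>i<n. \<Sum>i'<n. cnj (U i j) * gram K M i i' * U i' j)
                 + (\<Sum>i<n. \<Sum>i'<n. cnj (U i j) * gram K M' i i' * U i' j)"
      using mR unfolding meq_def by (simp add: sum.distrib[symmetric] algebra_simps)
    also have "\<dots> = complex_of_real (d j) + complex_of_real (d' j)"
      unfolding d_def d'_def W_def W'_def
      using transfer(2)[OF row, where M=M and K=K and j=j] transfer(2)[OF row, where M=M' and K=K and j=j]
      by simp
    finally show ?thesis by (metis of_real_add of_real_eq_iff)
  qed
  have d0: "0 \<le> d j" "0 \<le> d' j" for j unfolding d_def d'_def by (auto simp: nsq_nonneg)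
  have sd': "(\<Sum>j<n. d' j) = s'" unfolding d'_def W'_def s'def by (rule trace_transfer[OF row])
  have d'le: "d' j \<le> 1 - s" if "j < n" for j
  proof -
    have "d' j \<le> (\<Sum>j<n. d' j)" using that d0 by (intro member_le_sum) auto
    thus ?thesis using sd' ss by simp
  qed
  have s1: "s \<le> 1" using ss s'def nsq_nonneg by (metis le_add_same_cancel1 sum_nonneg)
  have upper: "s * (\<Sum>j<n. eta (d j / s)) \<le> Sf n R"
  proof -
    have "s * (\<Sum>j<n. eta (d j / s)) = (\<Sum>j<n. s * eta (d j / s))" by (simp add: sum_distrib_left)
    also have "\<dots> \<le> (\<Sum>j<n. eta (nu j))"
      using eta_conc[OF d0(1) d0(2) s0 s1] d'le nu_eq by (intro sum_mono) auto
    also have "\<dots> = Sf n R" by (rule vN_SD[OF SDR, symmetric])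
    finally show ?thesis .
  qed
  define Ms where "Ms k i = M k i / complex_of_real (sqrt s)" for k i
  define Ws where "Ws = (\<lambda>j k. \<Sum>i<n. cnj (Ms k i) * U i j)"
  have Ws_eq: "Ws j = (\<lambda>k. W j k / complex_of_real (sqrt s))" for j
    unfolding Ws_def W_def Ms_def by (intro ext) (simp add: sum_divide_distrib)
  have nWs: "nsq K (Ws j) = d j / s" for j
    unfolding Ws_eq nsq_div d_def using s0 by simp
  have mWs: "meq K (gram n (dualf Ms)) (gram n Ws)"
    unfolding meq_def Ws_def using transfer(1)[OF row] by simp
  obtain V mu where SD2: "SD K (gram n (dualf Ms)) V mu" using SD_gram_ex by blast
  have lower: "Sf n (gram K Ms) \<le> (\<Sum>j<n. eta (d j / s))"
  proof -
    have "Sf n (gram K Ms) = Sf K (gram n (dualf Ms))" by (rule schmidt)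
    also have "\<dots> = (\<Sum>k<K. eta (mu k))" by (rule vN_SD[OF SD2])
    also have "\<dots> \<le> (\<Sum>j<n. eta (nsq K (Ws j)))" by (rule K_bound[OF SD_cong[OF mWs SD2]])
    finally show ?thesis unfolding nWs .
  qed
  have "s * Sf n (gram K Ms) \<le> s * (\<Sum>j<n. eta (d j / s))"
    using lower s0 by (intro mult_left_mono) auto
  also note upper
  finally show ?thesis unfolding Ms_def .
qed

lemma h2_eta: "h2 p = eta p + eta (1 - p)" unfolding h2_def eta_def by simp

lemma sqrt_term: "0 \<le> x \<Longrightarrow> (complex_of_real (sqrt x) * a) * cnj (complex_of_real (sqrt x) * b) = complex_of_real x * (a * cnj b)"
proof -
  assume x: "0 \<le> x"
  have "(complex_of_real (sqrt x) * a) * cnj (complex_of_real (sqrt x) * b) = (complex_of_real (sqrt x) * complex_of_real (sqrt x)) * (a * cnj b)"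
    by (simp add: mult_ac)
  also have "complex_of_real (sqrt x) * complex_of_real (sqrt x) = complex_of_real x" using x by (simp flip: of_real_mult)
  finally show ?thesis .
qed

lemma eta_sum_scale:
  assumes "0 \<le> c" "\<And>j. j < n \<Longrightarrow> 0 \<le> l j"
  shows "(\<Sum>j<n. eta (c * l j)) = c * (\<Sum>j<n. eta (l j)) + eta c * (\<Sum>j<n. l j)"
proof -
  have "(\<Sum>j<n. eta (c * l j)) = (\<Sum>j<n. c * eta (l j) + eta c * l j)"
    using assms by (intro sum.cong refl) (simp add: eta_mult mult.commute)
  thus ?thesis by (simp add: sum.distrib sum_distrib_left)
qed

lemma mix_ub:
  fixes M1 M2 R :: "nat \<Rightarrow> nat \<Rightarrow> complex"
  assumes p: "0 \<le> p" "p \<le> 1" and tr1: "(\<Sum>k<K. nsq n (M1 k)) = 1" and tr2: "(\<Sum>k<K. nsq n (M2 k)) = 1"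
   and mR: "meq K R (\<lambda>k k'. complex_of_real p * gram n (dualf M1) k k' + complex_of_real (1 - p) * gram n (dualf M2) k k')"
  shows "Sf K R \<le> p * Sf n (gram K M1) + (1 - p) * Sf n (gram K M2) + h2 p"
proof -
  obtain U1 lam1 where SD1: "SD n (gram K M1) U1 lam1" using SD_gram_ex by blast
  obtain U2 lam2 where SD2: "SD n (gram K M2) U2 lam2" using SD_gram_ex by blast
  define W1 where "W1 = (\<lambda>j k. \<Sum>i<n. cnj (M1 k i) * U1 i j)"
  define W2 where "W2 = (\<lambda>j k. \<Sum>i<n. cnj (M2 k i) * U2 i j)"
  define W where "W j k = (if j < n then complex_of_real (sqrt p) * W1 j k
                           else complex_of_real (sqrt (1 - p)) * W2 (j - n) k)" for j k
  have gW: "gram (n + n) W k k' = complex_of_real p * gram n W1 k k' + complex_of_real (1 - p) * gram n W2 k k'" for k k'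
  proof -
    have h1: "(\<Sum>j<n. W j k * cnj (W j k')) = complex_of_real p * gram n W1 k k'"
      unfolding gram_def sum_distrib_left W_def using p by (intro sum.cong refl) (simp add: sqrt_term flip: of_real_mult)
    have h2: "(\<Sum>j<n. W (n + j) k * cnj (W (n + j) k')) = complex_of_real (1 - p) * gram n W2 k k'"
      unfolding gram_def sum_distrib_left W_def using p by (intro sum.cong refl) (simp add: sqrt_term flip: of_real_mult)
    show ?thesis unfolding gram_def[of "n+n"] sum_split_add h1 h2 ..
  qed
  have mW: "meq K R (gram (n + n) W)"
    using mR unfolding meq_def gW W1_def W2_def
    using transfer(1)[OF SD_rowc[OF SD1]] transfer(1)[OF SD_rowc[OF SD2]] by simp
  obtain V mu where SDR: "SD K R V mu" using spectral[OF herm_meq_gram[OF mW]] by blast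
  have lam1: "lam1 j = nsq K (W1 j)" if "j < n" for j unfolding W1_def by (rule lam_nsq[OF SD1 that])
  have lam2: "lam2 j = nsq K (W2 j)" if "j < n" for j unfolding W2_def by (rule lam_nsq[OF SD2 that])
  have sl1: "(\<Sum>j<n. lam1 j) = 1" using lam1 trace_transfer[OF SD_rowc[OF SD1], of K M1] tr1
    unfolding W1_def by simp
  have sl2: "(\<Sum>j<n. lam2 j) = 1" using lam2 trace_transfer[OF SD_rowc[OF SD2], of K M2] tr2
    unfolding W2_def by simp
  have l10: "0 \<le> lam1 j" if "j < n" for j using lam1[OF that] nsq_nonneg by simp
  have l20: "0 \<le> lam2 j" if "j < n" for j using lam2[OF that] nsq_nonneg by simp
  have "Sf K R = (\<Sum>k<K. eta (mu k))" by (rule vN_SD[OF SDR])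
  also have "\<dots> \<le> (\<Sum>j<n + n. eta (nsq K (W j)))" by (rule K_bound[OF SD_cong[OF mW SDR]])
  also have "\<dots> = (\<Sum>j<n. eta (p * lam1 j)) + (\<Sum>j<n. eta ((1 - p) * lam2 j))"
  proof -
    have a: "nsq K (W j) = p * lam1 j" if "j < n" for j
      using that p unfolding W_def by (simp add: nsq_scale lam1)
    have b: "nsq K (W (n + j)) = (1 - p) * lam2 j" if "j < n" for j
      using that p unfolding W_def by (simp add: nsq_scale lam2)
    show ?thesis unfolding sum_split_add using a b by simp
  qed
  also have "\<dots> = p * (\<Sum>j<n. eta (lam1 j)) + eta p * (\<Sum>j<n. lam1 j)
                 + ((1 - p) * (\<Sum>j<n. eta (lam2 j)) + eta (1 - p) * (\<Sum>j<n. lam2 j))"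
    using eta_sum_scale[of p n lam1] eta_sum_scale[of "1-p" n lam2] p l10 l20 by simp
  also have "\<dots> = p * Sf n (gram K M1) + (1 - p) * Sf n (gram K M2) + h2 p"
    unfolding sl1 sl2 h2_eta vN_SD[OF SD1] vN_SD[OF SD2] by simp
  finally show ?thesis .
qed

lemma flat_sum: fixes f :: "nat \<Rightarrow> 'a::comm_monoid_add" and n m :: nat
  shows "(\<Sum>x<n*m. f x) = (\<Sum>i<n. \<Sum>j<m. f (i*m+j))"
proof (induction n)
  case 0 thus ?case by simp
next
  case (Suc n)
  have "Suc n * m = n * m + m" by simp
  hence "(\<Sum>x<Suc n * m. f x) = (\<Sum>x<n*m. f x) + (\<Sum>j<m. f (n*m + j))" by (simp only: sum_split_add)
  thus ?case using Suc.IH by simp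
qed

lemma idx_lt: fixes i j n m :: nat assumes "i < n" "j < m" shows "i*m+j < n*m"
proof -
  have "i*m + j < i*m + m" using assms by simp
  also have "\<dots> = Suc i * m" by simp
  also have "\<dots> \<le> n * m" using assms by (intro mult_le_mono1) simp
  finally show ?thesis .
qed

lemma sqnorm_flat: "v \<in> carrier_vec (n*m) \<Longrightarrow> sqnorm v = (\<Sum>i<n. \<Sum>j<m. (cmod (v$(i*m+j)))\<^sup>2)"
  unfolding sqnorm_def by (simp add: flat_sum)

lemma outer_idx: "v \<in> carrier_vec d \<Longrightarrow> a < d \<Longrightarrow> b < d \<Longrightarrow> outer v $$ (a,b) = v$a * cnj (v$b)"
  unfolding outer_def by simp

lemma ent_gram:
  assumes v: "v \<in> carrier_vec (n*m)" and s: "0 < sqnorm v"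
  shows "ent n m v = Sf n (gram m (\<lambda>j i. v$(i*m+j) / complex_of_real (sqrt (sqnorm v))))"
proof -
  define s where "s = sqnorm v"
  have ss: "complex_of_real (sqrt s) * complex_of_real (sqrt s) = complex_of_real s"
    using s unfolding s_def by (simp flip: of_real_mult)
  have "ptrace_B n m ((1 / complex_of_real s) \<cdot>\<^sub>m outer v) = mat n n (\<lambda>(i,j). gram m (\<lambda>j i. v$(i*m+j) / complex_of_real (sqrt s)) i j)"
  proof (rule eq_matI)
    fix i i' assume "i < dim_row (mat n n (\<lambda>(i,j). gram m (\<lambda>j i. v$(i*m+j) / complex_of_real (sqrt s)) i j))"
      "i' < dim_col (mat n n (\<lambda>(i,j). gram m (\<lambda>j i. v$(i*m+j) / complex_of_real (sqrt s)) i j))"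
    hence ii: "i < n" "i' < n" by auto
    have "ptrace_B n m ((1 / complex_of_real s) \<cdot>\<^sub>m outer v) $$ (i,i') = (\<Sum>j<m. (1 / complex_of_real s) * (v$(i*m+j) * cnj (v$(i'*m+j))))"
      unfolding ptrace_B_def using ii v idx_lt[OF ii(1)] idx_lt[OF ii(2)]
      by (intro trans[OF index_mat(1)] sum.cong) (auto simp: outer_def)
    also have "\<dots> = gram m (\<lambda>j i. v$(i*m+j) / complex_of_real (sqrt s)) i i'"
      unfolding gram_def by (intro sum.cong refl) (simp add: ss[symmetric] field_simps)
    finally show "ptrace_B n m ((1 / complex_of_real s) \<cdot>\<^sub>m outer v) $$ (i,i') = mat n n (\<lambda>(i,j). gram m (\<lambda>j i. v$(i*m+j) / complex_of_real (sqrt s)) i j) $$ (i,i')"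
      using ii by simp
  qed (auto simp: ptrace_B_def)
  thus ?thesis unfolding ent_def Sf_def s_def by simp
qed

lemma polar: "(complex_of_real ((cmod a)\<^sup>2)) * (x * cnj y) + complex_of_real ((cmod b)\<^sup>2) * (u * cnj v)
   = ((a * x + b * u) * cnj (a * y + b * v)) / 2 + ((a * x + (- b) * u) * cnj (a * y + (- b) * v)) / 2"
  unfolding cmod_sq by (simp add: field_simps)

lemma sq2: "complex_of_real (sqrt 2) * complex_of_real (sqrt 2) = 2"
  by (simp flip: of_real_mult)

lemma norm_par: "(cmod (a * x + b * y))\<^sup>2 + (cmod (a * x + (- b) * y))\<^sup>2 = 2 * (cmod a)\<^sup>2 * (cmod x)\<^sup>2 + 2 * (cmod b)\<^sup>2 * (cmod y)\<^sup>2"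
proof -
  have "complex_of_real ((cmod (a * x + b * y))\<^sup>2 + (cmod (a * x + (- b) * y))\<^sup>2) =
        complex_of_real (2 * (cmod a)\<^sup>2 * (cmod x)\<^sup>2 + 2 * (cmod b)\<^sup>2 * (cmod y)\<^sup>2)"
    unfolding of_real_add of_real_mult cmod_sq by (simp add: algebra_simps)
  thus ?thesis by (simp only: of_real_eq_iff)
qed

theorem theorem2:
  fixes dA dB :: nat and \<Psi> \<Phi> :: "complex vec" and \<alpha> \<beta> :: complex
  assumes "\<Psi> \<in> carrier_vec (dA * dB)" and "\<Phi> \<in> carrier_vec (dA * dB)"
    and "sqnorm \<Psi> = 1" and "sqnorm \<Phi> = 1"
    and "(cmod \<alpha>)\<^sup>2 + (cmod \<beta>)\<^sup>2 = 1"
    and "\<alpha> \<cdot>\<^sub>v \<Psi> + \<beta> \<cdot>\<^sub>v \<Phi> \<noteq> 0\<^sub>v (dA * dB)"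
  shows "let \<Gamma> = \<alpha> \<cdot>\<^sub>v \<Psi> + \<beta> \<cdot>\<^sub>v \<Phi>;
             \<rho>AB = complex_of_real ((cmod \<alpha>)\<^sup>2) \<cdot>\<^sub>m outer \<Psi>
                  + complex_of_real ((cmod \<beta>)\<^sup>2) \<cdot>\<^sub>m outer \<Phi>;
             \<rho>A = ptrace_B dA dB \<rho>AB;
             \<rho>B = ptrace_A dA dB \<rho>AB
         in sqnorm \<Gamma> * ent dA dB \<Gamma>
            \<le> 2 * ((cmod \<alpha>)\<^sup>2 * ent dA dB \<Psi> + (cmod \<beta>)\<^sup>2 * ent dA dB \<Phi>
                   + h2 ((cmod \<alpha>)\<^sup>2) - \<bar>vN_entropy \<rho>A - vN_entropy \<rho>B\<bar>)"
proof -
  note \<Psi>c = assms(1) and \<Phi>c = assms(2)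
  define p where "p = (cmod \<alpha>)\<^sup>2"
  define q where "q = (cmod \<beta>)\<^sup>2"
  have q1: "q = 1 - p" using assms(5) unfolding p_def q_def by simp
  have b0: "0 \<le> (cmod \<beta>)\<^sup>2" by simp
  have p0: "0 \<le> p" "p \<le> 1" using assms(5) b0 unfolding p_def by (simp, linarith)
  define \<Gamma> where "\<Gamma> = \<alpha> \<cdot>\<^sub>v \<Psi> + \<beta> \<cdot>\<^sub>v \<Phi>"
  define \<Gamma>' where "\<Gamma>' = \<alpha> \<cdot>\<^sub>v \<Psi> + (- \<beta>) \<cdot>\<^sub>v \<Phi>"
  define \<rho>AB where "\<rho>AB = complex_of_real p \<cdot>\<^sub>m outer \<Psi> + complex_of_real q \<cdot>\<^sub>m outer \<Phi>"
  have \<Gamma>c: "\<Gamma> \<in> carrier_vec (dA*dB)" "\<Gamma>' \<in> carrier_vec (dA*dB)"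
    unfolding \<Gamma>_def \<Gamma>'_def using \<Psi>c \<Phi>c by auto
  define \<psi> where "\<psi> i j = \<Psi> $ (i*dB+j)" for i j
  define \<phi> where "\<phi> i j = \<Phi> $ (i*dB+j)" for i j
  define \<gamma> where "\<gamma> i j = \<alpha> * \<psi> i j + \<beta> * \<phi> i j" for i j
  define \<gamma>' where "\<gamma>' i j = \<alpha> * \<psi> i j + (- \<beta>) * \<phi> i j" for i j
  have \<Gamma>idx: "\<Gamma> $ (i*dB+j) = \<gamma> i j" "\<Gamma>' $ (i*dB+j) = \<gamma>' i j" if "i < dA" "j < dB" for i j
    using idx_lt[OF that] \<Psi>c \<Phi>c unfolding \<Gamma>_def \<Gamma>'_def \<gamma>_def \<gamma>'_def \<psi>_def \<phi>_def by auto
  define sg where "sg = sqnorm \<Gamma>"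
  define sg' where "sg' = sqnorm \<Gamma>'"
  have sgf: "sg = (\<Sum>i<dA. \<Sum>j<dB. (cmod (\<gamma> i j))\<^sup>2)" "sg' = (\<Sum>i<dA. \<Sum>j<dB. (cmod (\<gamma>' i j))\<^sup>2)"
    unfolding sg_def sg'_def sqnorm_flat[OF \<Gamma>c(1)] sqnorm_flat[OF \<Gamma>c(2)] using \<Gamma>idx by auto
  have \<Psi>f: "(\<Sum>i<dA. \<Sum>j<dB. (cmod (\<psi> i j))\<^sup>2) = 1" "(\<Sum>i<dA. \<Sum>j<dB. (cmod (\<phi> i j))\<^sup>2) = 1"
    using assms(3,4) unfolding sqnorm_flat[OF \<Psi>c] sqnorm_flat[OF \<Phi>c] \<psi>_def \<phi>_def by auto
  have sgs: "sg + sg' = 2"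
  proof -
    have "sg + sg' = (\<Sum>i<dA. \<Sum>j<dB. 2 * p * (cmod (\<psi> i j))\<^sup>2 + 2 * q * (cmod (\<phi> i j))\<^sup>2)"
      unfolding sgf sum.distrib[symmetric] \<gamma>_def \<gamma>'_def p_def q_def by (intro sum.cong refl) (rule norm_par)
    also have "\<dots> = 2 * p * (\<Sum>i<dA. \<Sum>j<dB. (cmod (\<psi> i j))\<^sup>2) + 2 * q * (\<Sum>i<dA. \<Sum>j<dB. (cmod (\<phi> i j))\<^sup>2)"
      by (simp add: sum.distrib sum_distrib_left)
    also have "\<dots> = 2" using \<Psi>f q1 by simp
    finally show ?thesis .
  qed
  have sg0: "0 < sg"
  proof -
    obtain x where x: "x < dA*dB" "\<Gamma> $ x \<noteq> 0"
      using assms(6) \<Gamma>c(1) unfolding \<Gamma>_def[symmetric] by (metis carrier_vecD eq_vecI index_zero_vec(1) index_zero_vec(2))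
    have "(cmod (\<Gamma> $ x))\<^sup>2 \<le> sg" unfolding sg_def sqnorm_def using x \<Gamma>c(1) by (intro member_le_sum) auto
    moreover have "0 < (cmod (\<Gamma> $ x))\<^sup>2" using x by simp
    ultimately show ?thesis by linarith
  qed
  define MG where "MG j i = \<gamma> i j / complex_of_real (sqrt sg)" for j i
  have EG: "ent dA dB \<Gamma> = Sf dA (gram dB MG)"
  proof -
    have "ent dA dB \<Gamma> = Sf dA (gram dB (\<lambda>j i. \<Gamma>$(i*dB+j) / complex_of_real (sqrt (sqnorm \<Gamma>))))"
      by (rule ent_gram[OF \<Gamma>c(1)]) (use sg0 sg_def in simp)
    also have "\<dots> = Sf dA (gram dB MG)"
      by (rule Sf_cong) (auto simp: meq_def gram_def MG_def \<Gamma>idx sg_def intro!: sum.cong)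
    finally show ?thesis .
  qed
  define M\<psi> where "M\<psi> j i = \<psi> i j" for j i
  define M\<phi> where "M\<phi> j i = \<phi> i j" for j i
  have E\<Psi>: "ent dA dB \<Psi> = Sf dA (gram dB M\<psi>)"
  proof -
    have "ent dA dB \<Psi> = Sf dA (gram dB (\<lambda>j i. \<Psi>$(i*dB+j) / complex_of_real (sqrt (sqnorm \<Psi>))))"
      by (rule ent_gram[OF \<Psi>c]) (use assms(3) in simp)
    also have "\<dots> = Sf dA (gram dB M\<psi>)"
      unfolding assms(3) M\<psi>_def \<psi>_def by simp
    finally show ?thesis .
  qed
  have E\<Phi>: "ent dA dB \<Phi> = Sf dA (gram dB M\<phi>)"
  proof -
    have "ent dA dB \<Phi> = Sf dA (gram dB (\<lambda>j i. \<Phi>$(i*dB+j) / complex_of_real (sqrt (sqnorm \<Phi>))))"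
      by (rule ent_gram[OF \<Phi>c]) (use assms(4) in simp)
    also have "\<dots> = Sf dA (gram dB M\<phi>)"
      unfolding assms(4) M\<phi>_def \<phi>_def by simp
    finally show ?thesis .
  qed
  have \<rho>idx: "\<rho>AB $$ (a,b) = complex_of_real p * (\<Psi>$a * cnj (\<Psi>$b)) + complex_of_real q * (\<Phi>$a * cnj (\<Phi>$b))"
    if "a < dA*dB" "b < dA*dB" for a b
    using that \<Psi>c \<Phi>c unfolding \<rho>AB_def by (simp add: outer_def)
  define RA where "RA i i' = (\<Sum>j<dB. \<rho>AB $$ (i*dB+j, i'*dB+j))" for i i'
  define RB where "RB j j' = (\<Sum>i<dA. \<rho>AB $$ (i*dB+j, i*dB+j'))" for j j'
  have SA: "vN_entropy (ptrace_B dA dB \<rho>AB) = Sf dA RA" unfolding Sf_def RA_def ptrace_B_def ..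
  have SB: "vN_entropy (ptrace_A dA dB \<rho>AB) = Sf dB RB" unfolding Sf_def RB_def ptrace_A_def ..
  have RAe: "RA i i' = (\<Sum>j<dB. complex_of_real p * (\<psi> i j * cnj (\<psi> i' j)) + complex_of_real q * (\<phi> i j * cnj (\<phi> i' j)))"
    if "i < dA" "i' < dA" for i i'
    unfolding RA_def \<psi>_def \<phi>_def using that by (auto intro!: sum.cong simp: \<rho>idx idx_lt)
  have RBe: "RB j j' = (\<Sum>i<dA. complex_of_real p * (\<psi> i j * cnj (\<psi> i j')) + complex_of_real q * (\<phi> i j * cnj (\<phi> i j')))"
    if "j < dB" "j' < dB" for j j'
    unfolding RB_def \<psi>_def \<phi>_def using that by (auto intro!: sum.cong simp: \<rho>idx idx_lt)
  have sqm: "complex_of_real (sqrt 2) * complex_of_real (sqrt (sg/2)) = complex_of_real (sqrt sg)"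
    by (simp flip: of_real_mult real_sqrt_mult)
  have nsq2: "(cmod (z / complex_of_real (sqrt 2)))\<^sup>2 = (cmod z)\<^sup>2 / 2" for z
    by (simp add: norm_divide power_divide)
  have g2: "(z / complex_of_real (sqrt 2)) * cnj (w / complex_of_real (sqrt 2)) = z * cnj w / 2" for z w
    by (simp add: sq2)
  define CA where "CA j i = \<gamma> i j / complex_of_real (sqrt 2)" for j i
  define CA' where "CA' j i = \<gamma>' i j / complex_of_real (sqrt 2)" for j i
  have cA: "(sg/2) * Sf dA (gram dB (\<lambda>j i. CA j i / complex_of_real (sqrt (sg/2)))) \<le> Sf dA RA"
  proof (rule conc)
    show "meq dA RA (\<lambda>i i'. gram dB CA i i' + gram dB CA' i i')"
      unfolding meq_def
    proof (intro allI impI)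
      fix i i' assume ii: "i < dA" "i' < dA"
      show "RA i i' = gram dB CA i i' + gram dB CA' i i'"
        unfolding RAe[OF ii] gram_def CA_def CA'_def g2 sum.distrib[symmetric] p_def q_def \<gamma>_def \<gamma>'_def
        by (intro sum.cong refl) (rule polar)
    qed
    show "sg/2 = (\<Sum>j<dB. nsq dA (CA j))"
      unfolding sgf nsq_def CA_def nsq2 by (simp add: sum_divide_distrib[symmetric] sum.swap[of _ "{..<dB}"])
    show "sg'/2 = (\<Sum>j<dB. nsq dA (CA' j))"
      unfolding sgf nsq_def CA'_def nsq2 by (simp add: sum_divide_distrib[symmetric] sum.swap[of _ "{..<dB}"])
    show "sg/2 + sg'/2 = 1" using sgs by simp
    show "0 < sg/2" using sg0 by simp
  qed
  have cA2: "(\<lambda>j i. CA j i / complex_of_real (sqrt (sg/2))) = MG"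
    unfolding CA_def MG_def sqm[symmetric] by (intro ext) (simp add: divide_divide_eq_left)
  have concA: "(sg/2) * ent dA dB \<Gamma> \<le> Sf dA RA" using cA unfolding cA2 EG .
  define CB where "CB i j = \<gamma> i j / complex_of_real (sqrt 2)" for i j
  define CB' where "CB' i j = \<gamma>' i j / complex_of_real (sqrt 2)" for i j
  have cB: "(sg/2) * Sf dB (gram dA (\<lambda>i j. CB i j / complex_of_real (sqrt (sg/2)))) \<le> Sf dB RB"
  proof (rule conc)
    show "meq dB RB (\<lambda>j j'. gram dA CB j j' + gram dA CB' j j')"
      unfolding meq_def
    proof (intro allI impI)
      fix j j' assume jj: "j < dB" "j' < dB"
      show "RB j j' = gram dA CB j j' + gram dA CB' j j'"
        unfolding RBe[OF jj] gram_def CB_def CB'_def g2 sum.distrib[symmetric] p_def q_def \<gamma>_def \<gamma>'_def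
        by (intro sum.cong refl) (rule polar)
    qed
    show "sg/2 = (\<Sum>i<dA. nsq dB (CB i))"
      unfolding sgf nsq_def CB_def nsq2 by (simp add: sum_divide_distrib[symmetric])
    show "sg'/2 = (\<Sum>i<dA. nsq dB (CB' i))"
      unfolding sgf nsq_def CB'_def nsq2 by (simp add: sum_divide_distrib[symmetric])
    show "sg/2 + sg'/2 = 1" using sgs by simp
    show "0 < sg/2" using sg0 by simp
  qed
  have cB2: "(\<lambda>i j. CB i j / complex_of_real (sqrt (sg/2))) = (\<lambda>i j. MG j i)"
    unfolding CB_def MG_def sqm[symmetric] by (intro ext) (simp add: divide_divide_eq_left)
  have EGB: "Sf dB (gram dA (\<lambda>i j. MG j i)) = ent dA dB \<Gamma>"
  proof -
    have "ent dA dB \<Gamma> = Sf dB (gram dA (dualf MG))" unfolding EG by (rule schmidt)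
    also have "gram dA (dualf MG) = (\<lambda>j j'. gram dA (\<lambda>i j. MG j i) j' j)"
      unfolding gram_def dualf_def by (intro ext) (simp add: mult.commute)
    also have "Sf dB \<dots> = Sf dB (gram dA (\<lambda>i j. MG j i))" by (rule Sf_transpose)
    finally show ?thesis by simp
  qed
  have concB: "(sg/2) * ent dA dB \<Gamma> \<le> Sf dB RB" using cB unfolding cB2 EGB .
  define NA1 where "NA1 i j = cnj (\<psi> i j)" for i j
  define NA2 where "NA2 i j = cnj (\<phi> i j)" for i j
  have uA: "Sf dA RA \<le> p * Sf dB (gram dA NA1) + (1 - p) * Sf dB (gram dA NA2) + h2 p"
  proof (rule mix_ub[OF p0])
    show "(\<Sum>k<dA. nsq dB (NA1 k)) = 1" unfolding nsq_def NA1_def using \<Psi>f(1) by simp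
    show "(\<Sum>k<dA. nsq dB (NA2 k)) = 1" unfolding nsq_def NA2_def using \<Psi>f(2) by simp
    show "meq dA RA (\<lambda>k k'. complex_of_real p * gram dB (dualf NA1) k k' + complex_of_real (1 - p) * gram dB (dualf NA2) k k')"
      unfolding meq_def
    proof (intro allI impI)
      fix i i' assume ii: "i < dA" "i' < dA"
      show "RA i i' = complex_of_real p * gram dB (dualf NA1) i i' + complex_of_real (1 - p) * gram dB (dualf NA2) i i'"
        unfolding RAe[OF ii] gram_def dualf_def NA1_def NA2_def q1[symmetric]
        by (simp add: sum.distrib sum_distrib_left)
    qed
  qed
  have EA1: "Sf dB (gram dA NA1) = ent dA dB \<Psi>"
  proof -
    have "dualf M\<psi> = NA1" unfolding dualf_def M\<psi>_def NA1_def by (intro ext) simp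
    thus ?thesis unfolding E\<Psi> schmidt[of dA dB M\<psi>] by simp
  qed
  have EA2: "Sf dB (gram dA NA2) = ent dA dB \<Phi>"
  proof -
    have "dualf M\<phi> = NA2" unfolding dualf_def M\<phi>_def NA2_def by (intro ext) simp
    thus ?thesis unfolding E\<Phi> schmidt[of dA dB M\<phi>] by simp
  qed
  define NB1 where "NB1 j i = cnj (\<psi> i j)" for j i
  define NB2 where "NB2 j i = cnj (\<phi> i j)" for j i
  have uB: "Sf dB RB \<le> p * Sf dA (gram dB NB1) + (1 - p) * Sf dA (gram dB NB2) + h2 p"
  proof (rule mix_ub[OF p0])
    show "(\<Sum>k<dB. nsq dA (NB1 k)) = 1" unfolding nsq_def NB1_def using \<Psi>f(1) by (simp add: sum.swap[of _ "{..<dB}"])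
    show "(\<Sum>k<dB. nsq dA (NB2 k)) = 1" unfolding nsq_def NB2_def using \<Psi>f(2) by (simp add: sum.swap[of _ "{..<dB}"])
    show "meq dB RB (\<lambda>k k'. complex_of_real p * gram dA (dualf NB1) k k' + complex_of_real (1 - p) * gram dA (dualf NB2) k k')"
      unfolding meq_def
    proof (intro allI impI)
      fix j j' assume jj: "j < dB" "j' < dB"
      show "RB j j' = complex_of_real p * gram dA (dualf NB1) j j' + complex_of_real (1 - p) * gram dA (dualf NB2) j j'"
        unfolding RBe[OF jj] gram_def dualf_def NB1_def NB2_def q1[symmetric]
        by (simp add: sum.distrib sum_distrib_left)
    qed
  qed
  have EB1: "Sf dA (gram dB NB1) = ent dA dB \<Psi>"
  proof -
    have "gram dB NB1 = (\<lambda>i i'. gram dB M\<psi> i' i)"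
      unfolding gram_def NB1_def M\<psi>_def by (intro ext) (simp add: mult.commute)
    thus ?thesis unfolding E\<Psi> using Sf_transpose[of dA "gram dB M\<psi>"] by simp
  qed
  have EB2: "Sf dA (gram dB NB2) = ent dA dB \<Phi>"
  proof -
    have "gram dB NB2 = (\<lambda>i i'. gram dB M\<phi> i' i)"
      unfolding gram_def NB2_def M\<phi>_def by (intro ext) (simp add: mult.commute)
    thus ?thesis unfolding E\<Phi> using Sf_transpose[of dA "gram dB M\<phi>"] by simp
  qed
  define X where "X = p * ent dA dB \<Psi> + q * ent dA dB \<Phi> + h2 p"
  have A1: "Sf dA RA \<le> X" using uA unfolding EA1 EA2 X_def q1 .
  have B1: "Sf dB RB \<le> X" using uB unfolding EB1 EB2 X_def q1 .
  have fin: "sg * ent dA dB \<Gamma> \<le> 2 * (X - \<bar>Sf dA RA - Sf dB RB\<bar>)"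
  proof -
    have cA': "sg * ent dA dB \<Gamma> \<le> 2 * Sf dA RA" using mult_left_mono[OF concA, of 2] by simp
    have cB': "sg * ent dA dB \<Gamma> \<le> 2 * Sf dB RB" using mult_left_mono[OF concB, of 2] by simp
    show ?thesis
    proof (cases "Sf dA RA \<le> Sf dB RB")
      case True
      hence "\<bar>Sf dA RA - Sf dB RB\<bar> = Sf dB RB - Sf dA RA" by simp
      thus ?thesis using cA' B1 by (simp add: algebra_simps)
    next
      case False
      hence "\<bar>Sf dA RA - Sf dB RB\<bar> = Sf dA RA - Sf dB RB" by simp
      thus ?thesis using cB' A1 by (simp add: algebra_simps)
    qed
  qed
  show ?thesis
    unfolding Let_def p_def[symmetric] q_def[symmetric] \<Gamma>_def[symmetric] \<rho>AB_def[symmetric] SA SB sg_def[symmetric]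
    using fin unfolding X_def by simp
qed

end
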